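(* Fix an integer $s\ge 2$. For each $n$, let $G_n$ be a graph with $n$ vertices and $m_n$ edges, and let $\mathbf{c}_n(s)=(c_{1,n},\ldots,c_{s,n})$ be a composition of $n$ into $s$ positive parts ($\sum_i c_{i,n}=n$). Color $G_n$ by a uniformly random $\mathbf{c}_n(s)$-coloring, and let $M_i(G_n)$ be the number of edges both of whose ends receive color $i$, $M(G_n)=\sum_{i=1}^s M_i(G_n)$ and $L(G_n)=m_n-M(G_n)$. Let $\hat c_n=\min_{i\in[s]}c_{i,n}$, $\zeta_n=\sqrt{\Sigma_2(G_n)}/m_n$, $\boldsymbol{\upsilon}_s=s^{-1}\mathbf{1}_s$, and $$\boldsymbol{M}(G_n)=(M_1(G_n),\ldots,M_s(G_n)),\qquad \overline{\boldsymbol{M}}(G_n)=(\mathbb{E}[M_1(G_n)],\ldots,\mathbb{E}[M_s(G_n)]).$$ Assume $\liminf_n \hat c_n/n>0$ and $m_n\to\infty$. Then: (i) If $\zeta_n=o(1)$, then $\boldsymbol{M}(G_n)=(1+o_P(1))\boldsymbol{I}_s\overline{\boldsymbol{M}}(G_n)$, where $o_P(1)$ denotes a random variable converging to $0$ in probability and $\boldsymbol{I}_s$ is the $s\times s$ identity matrix (i.e. $M_i(G_n)/\mathbb{E}[M_i(G_n)]\to 1$ in probability for every $i$); in particular $L(G_n)$ and $M(G_n)$ concentrate in probability around their expected values (i.e. $L(G_n)/\mathbb{E}[L(G_n)]\to1$ and $M(G_n)/\mathbb{E}[M(G_n)]\to 1$ in probability). (ii) Suppose $\zeta_n=\Theta(1)$.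 If $\liminf_{n\to\infty}\|n^{-1}\mathbf{c}_n(s)-\boldsymbol{\upsilon}_s\|>0$, then $$\liminf_{n\to\infty}\Pr\big(|M(G_n)-\mathbb{E}[M(G_n)]|>0\big)>0\quad\text{and}\quad \liminf_{n\to\infty}\Pr\big(|L(G_n)-\mathbb{E}[L(G_n)]|>0\big)>0;$$ if instead $\|n^{-1}\mathbf{c}_n(s)-\boldsymbol{\upsilon}_s\|\to 0$, then both $L(G_n)$ and $M(G_n)$ concentrate in probability around their expected values, regardless of $\zeta_n$.
   Context: A $\mathbf{c}$-coloring of an $n$-vertex graph $G$, for a composition $\mathbf{c}=(c_1,\ldots,c_s)$ of $n$, is a surjective map $f:V(G)\to[s]$ with $|f^{-1}(i)|=c_i$ for all $i$; the set of all such colorings carries the uniform probability measure (each coloring has probability $c_1!\cdots c_s!/n!$). $\Sigma_2(G)$ denotes the sum of the squares of the vertex degrees of $G$. $\|\cdot\|$ is the Euclidean norm. $\zeta_n=\Theta(1)$ means $\zeta_n$ is bounded above and below by positive constants for all large $n$. *)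

theory Defs
  imports "HOL-Probability.Probability"
begin

definition simple_graph :: "nat \<Rightarrow> nat set set \<Rightarrow> bool" where
  "simple_graph n E \<longleftrightarrow> E \<subseteq> {{u, v} | u v. u < n \<and> v < n \<and> u \<noteq> v}"

definition degree :: "nat set set \<Rightarrow> nat \<Rightarrow> nat" where
  "degree E v = card {e \<in> E. v \<in> e}"

definition Sigma2 :: "nat \<Rightarrow> nat set set \<Rightarrow> real" where
  "Sigma2 n E = (\<Sum>v<n. real (degree E v) ^ 2)"

definition zeta :: "nat \<Rightarrow> nat set set \<Rightarrow> real" where
  "zeta n E = sqrt (Sigma2 n E) / real (card E)"

definition composition :: "nat \<Rightarrow> nat \<Rightarrow> (nat \<Rightarrow> nat) \<Rightarrow> bool" where
  "composition s n c \<longleftrightarrow> (\<forall>i<s. 0 < c i) \<and> (\<Sum>i<s. c i) = n"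

text \<open>c-colorings of the vertex set {0..<n} with colors {0..<s}
  (colour classes have prescribed sizes; surjectivity follows from positivity of the parts).\<close>
definition colorings :: "nat \<Rightarrow> nat \<Rightarrow> (nat \<Rightarrow> nat) \<Rightarrow> (nat \<Rightarrow> nat) set" where
  "colorings s n c = {f \<in> {..<n} \<rightarrow>\<^sub>E {..<s}. \<forall>i<s. card {v \<in> {..<n}. f v = i} = c i}"

definition coloring_pmf :: "nat \<Rightarrow> nat \<Rightarrow> (nat \<Rightarrow> nat) \<Rightarrow> (nat \<Rightarrow> nat) pmf" where
  "coloring_pmf s n c = pmf_of_set (colorings s n c)"

definition Mi :: "nat set set \<Rightarrow> nat \<Rightarrow> (nat \<Rightarrow> nat) \<Rightarrow> real" where
  "Mi E i f = real (card {e \<in> E. \<forall>v\<in>e. f v = i})"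

definition Mtot :: "nat \<Rightarrow> nat set set \<Rightarrow> (nat \<Rightarrow> nat) \<Rightarrow> real" where
  "Mtot s E f = (\<Sum>i<s. Mi E i f)"

definition Ltot :: "nat \<Rightarrow> nat set set \<Rightarrow> (nat \<Rightarrow> nat) \<Rightarrow> real" where
  "Ltot s E f = real (card E) - Mtot s E f"

definition concentrates :: "(nat \<Rightarrow> 'a pmf) \<Rightarrow> (nat \<Rightarrow> 'a \<Rightarrow> real) \<Rightarrow> bool" where
  "concentrates P X \<longleftrightarrow> (\<forall>\<epsilon>>0. (\<lambda>n. measure_pmf.prob (P n)
      {f. \<bar>X n f / measure_pmf.expectation (P n) (X n) - 1\<bar> > \<epsilon>}) \<longlonglongrightarrow> 0)"

end

theory Submission
  imports Defs "HOL-Real_Asymp.Real_Asymp"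
begin

definition ind :: "bool \<Rightarrow> real" where "ind b = of_bool b"

lemma ind_simps[simp]: "ind True = 1" "ind False = 0" by (auto simp: ind_def)
lemma ind_ge0[simp]: "0 \<le> ind b" and ind_le1[simp]: "ind b \<le> 1" by (auto simp: ind_def)
lemma ind_mult: "ind a * ind b = ind (a \<and> b)" by (auto simp: ind_def)
lemma ind_sq[simp]: "ind a * ind a = ind a" by (auto simp: ind_def)

lemma sum_ind_card: "finite A \<Longrightarrow> (\<Sum>x\<in>A. ind (P x)) = real (card {x\<in>A. P x})"
proof -
  assume "finite A"
  have "(\<Sum>x\<in>A. ind (P x)) = (\<Sum>x\<in>A. of_bool (P x))" by (simp only: ind_def)
  also have "\<dots> = real (card (A \<inter> {x. P x}))" using \<open>finite A\<close> by simp
  also have "A \<inter> {x. P x} = {x\<in>A. P x}" by auto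
  finally show ?thesis .
qed

lemma sum_excl1:
  fixes g :: "'a \<Rightarrow> real"
  assumes "finite A" "u \<in> A"
  shows "(\<Sum>v\<in>A. ind (v \<noteq> u) * g v) = (\<Sum>v\<in>A. g v) - g u"
proof -
  have "(\<Sum>v\<in>A. g v) = (\<Sum>v\<in>A. ind (v \<noteq> u) * g v + ind (v = u) * g v)"
    by (rule sum.cong) (auto simp: ind_def)
  also have "\<dots> = (\<Sum>v\<in>A. ind (v \<noteq> u) * g v) + (\<Sum>v\<in>A. ind (v = u) * g v)"
    by (simp add: sum.distrib)
  also have "(\<Sum>v\<in>A. ind (v = u) * g v) = g u"
  proof -
    have "(\<Sum>v\<in>A. ind (v = u) * g v) = (\<Sum>v\<in>A. if v = u then g v else 0)"
      by (rule sum.cong) (auto simp: ind_def)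
    also have "\<dots> = g u" using assms by (simp add: sum.delta')
    finally show ?thesis .
  qed
  finally show ?thesis by simp
qed

lemma colorings_finite: "finite (colorings s n c)"
proof -
  have "colorings s n c \<subseteq> {..<n} \<rightarrow>\<^sub>E {..<s}" by (auto simp: colorings_def)
  thus ?thesis by (rule finite_subset) (simp add: finite_PiE)
qed

lemma colorings_nonempty_aux: "colorings s (\<Sum>i<s. c i) c \<noteq> {}"
proof (induction s)
  case 0
  have "(\<lambda>_. undefined) \<in> colorings 0 0 c" by (auto simp: colorings_def)
  thus ?case by auto
next
  case (Suc s)
  define n' where "n' = (\<Sum>i<s. c i)"
  define n where "n = (\<Sum>i<Suc s. c i)"
  have nn: "n = n' + c s" by (simp add: n_def n'_def)
  from Suc obtain f where f: "f \<in> colorings s n' c" unfolding n'_def by auto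
  define g where "g v = (if v < n' then f v else if v < n then s else undefined)" for v
  have fr: "v < n' \<Longrightarrow> f v < s" for v using f by (auto simp: colorings_def)
  have "g \<in> colorings (Suc s) n c"
    unfolding colorings_def
  proof (intro CollectI conjI allI impI)
    show "g \<in> {..<n} \<rightarrow>\<^sub>E {..<Suc s}"
      using fr nn by (auto simp: g_def PiE_def extensional_def less_Suc_eq)
    fix i assume i: "i < Suc s"
    show "card {v \<in> {..<n}. g v = i} = c i"
    proof (cases "i < s")
      case True
      have "{v \<in> {..<n}. g v = i} = {v \<in> {..<n'}. f v = i}"
        using True nn by (auto simp: g_def)
      thus ?thesis using f True by (simp add: colorings_def)
    next
      case False
      hence "i = s" using i by simp
      have gs: "g v = s \<longleftrightarrow> n' \<le> v" if "v < n" for v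
        using fr[of v] that by (auto simp: g_def)
      have "{v \<in> {..<n}. g v = i} = {n'..<n}"
      proof (rule set_eqI)
        fix v show "v \<in> {v \<in> {..<n}. g v = i} \<longleftrightarrow> v \<in> {n'..<n}"
          using gs[of v] nn \<open>i = s\<close> by auto
      qed
      thus ?thesis using nn \<open>i = s\<close> by simp
    qed
  qed
  thus ?case unfolding n_def by auto
qed

lemma colorings_nonempty: "composition s n c \<Longrightarrow> colorings s n c \<noteq> {}"
  using colorings_nonempty_aux[of s c] by (auto simp: composition_def)

lemma col_lt: "f \<in> colorings s n c \<Longrightarrow> v < n \<Longrightarrow> f v < s"
  by (auto simp: colorings_def)

lemma col_class: "f \<in> colorings s n c \<Longrightarrow> i < s \<Longrightarrow> (\<Sum>v<n. ind (f v = i)) = real (c i)"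
  by (simp add: sum_ind_card colorings_def)

lemma col_class_ge: "f \<in> colorings s n c \<Longrightarrow> \<not> i < s \<Longrightarrow> (\<Sum>v<n. ind (f v = i)) = 0"
  by (rule sum.neutral) (auto dest: col_lt)

definition sw :: "nat \<Rightarrow> nat \<Rightarrow> nat \<Rightarrow> nat" where
  "sw a b x = (if x = a then b else if x = b then a else x)"

lemma sw_sw[simp]: "sw a b (sw a b x) = x" by (auto simp: sw_def)

lemma sw_image_iff: "x \<in> sw a b ` A \<longleftrightarrow> sw a b x \<in> A"
proof
  assume "x \<in> sw a b ` A" then obtain y where "y \<in> A" "x = sw a b y" by blast
  thus "sw a b x \<in> A" by simp
next
  assume "sw a b x \<in> A"
  hence "sw a b (sw a b x) \<in> sw a b ` A" by (rule imageI)
  thus "x \<in> sw a b ` A" by simp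
qed

lemma col_sw: assumes f: "f \<in> colorings s n c" and ab: "a < n" "b < n"
  shows "f \<circ> sw a b \<in> colorings s n c"
proof -
  have bij: "bij_betw (sw a b) {..<n} {..<n}"
    by (rule bij_betw_byWitness[where f'="sw a b"]) (use ab in \<open>auto simp: sw_def\<close>)
  show ?thesis unfolding colorings_def
  proof (intro CollectI conjI allI impI)
    show "f \<circ> sw a b \<in> {..<n} \<rightarrow>\<^sub>E {..<s}"
      using f ab by (auto simp: colorings_def PiE_def extensional_def sw_def Pi_def)
    fix i assume "i < s"
    have "{v \<in> {..<n}. (f \<circ> sw a b) v = i} = sw a b ` {v \<in> {..<n}. f v = i}"
    proof (rule set_eqI)
      fix x
      have lt: "sw a b x < n \<longleftrightarrow> x < n" using ab by (auto simp: sw_def)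
      show "x \<in> {v \<in> {..<n}. (f \<circ> sw a b) v = i} \<longleftrightarrow> x \<in> sw a b ` {v \<in> {..<n}. f v = i}"
        using lt sw_image_iff[of x a b "{v \<in> {..<n}. f v = i}"] by auto
    qed
    also have "card \<dots> = card {v \<in> {..<n}. f v = i}"
      by (rule card_image) (rule inj_onI, metis sw_sw)
    finally show "card {v \<in> {..<n}. (f \<circ> sw a b) v = i} = c i"
      using f \<open>i < s\<close> by (simp add: colorings_def)
  qed
qed

lemma card_sw: assumes ab: "a < n" "b < n"
  shows "card {f \<in> colorings s n c. P (f \<circ> sw a b)} = card {f \<in> colorings s n c. P f}"
proof -
  have "(\<lambda>f. f \<circ> sw a b) ` {f \<in> colorings s n c. P (f \<circ> sw a b)} = {f \<in> colorings s n c. P f}"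
  proof safe
    fix g assume "g \<in> colorings s n c" "P g"
    moreover have "g = (g \<circ> sw a b) \<circ> sw a b" by (auto simp: fun_eq_iff)
    ultimately show "g \<in> (\<lambda>f. f \<circ> sw a b) ` {f \<in> colorings s n c. P (f \<circ> sw a b)}"
      using col_sw[OF _ ab] by (intro image_eqI[of g _ "g \<circ> sw a b"]) auto
  qed (use col_sw[OF _ ab] in auto)
  moreover have inj: "inj_on (\<lambda>f. f \<circ> sw a b) X" for X
  proof (rule inj_onI)
    fix f g assume eq: "f \<circ> sw a b = g \<circ> sw a b"
    show "f = g"
    proof
      fix x
      have "(f \<circ> sw a b) (sw a b x) = (g \<circ> sw a b) (sw a b x)" using eq by simp
      thus "f x = g x" by simp
    qed
  qed
  ultimately have "card {f \<in> colorings s n c. P f} = card ((\<lambda>f. f \<circ> sw a b) ` {f \<in> colorings s n c. P (f \<circ> sw a b)})"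
    by simp
  also have "\<dots> = card {f \<in> colorings s n c. P (f \<circ> sw a b)}" by (rule card_image) (rule inj)
  finally show ?thesis by simp
qed

lemma sym_aux:
  assumes "distinct (pre @ xs)" "distinct (pre @ ys)" "length xs = length ys"
    "set pre \<subseteq> {..<n}" "set xs \<subseteq> {..<n}" "set ys \<subseteq> {..<n}"
  shows "card {f \<in> colorings s n c. map f (pre @ xs) = is} = card {f \<in> colorings s n c. map f (pre @ ys) = is}"
  using assms
proof (induction xs arbitrary: pre ys)
  case Nil thus ?case by simp
next
  case (Cons a xs)
  then obtain b ys' where ys: "ys = b # ys'" by (cases ys) auto
  have ab: "a < n" "b < n" using Cons.prems ys by auto
  let ?t = "sw a b"
  have mp: "map ?t (pre @ b # ys') = (pre @ [a]) @ map ?t ys'"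
  proof -
    have "map ?t pre = pre" using Cons.prems ys by (auto simp: sw_def intro!: map_idI)
    thus ?thesis by (simp add: sw_def)
  qed
  have "card {f \<in> colorings s n c. map f (pre @ b # ys') = is}
      = card {f \<in> colorings s n c. map (f \<circ> ?t) (pre @ b # ys') = is}"
    using card_sw[OF ab, where P="\<lambda>f. map f (pre @ b # ys') = is"] by simp
  also have "\<dots> = card {f \<in> colorings s n c. map f ((pre @ [a]) @ map ?t ys') = is}"
    by (simp only: mp[symmetric] map_map)
  also have "\<dots> = card {f \<in> colorings s n c. map f ((pre @ [a]) @ xs) = is}"
  proof (rule sym, rule Cons.IH)
    have inj: "inj ?t"
    proof (rule injI)
      fix x y assume "sw a b x = sw a b y"
      hence "sw a b (sw a b x) = sw a b (sw a b y)" by simp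
      thus "x = y" by simp
    qed
    have "distinct (map ?t (pre @ b # ys'))" using Cons.prems(2) ys
      by (simp only: distinct_map inj_on_subset[OF inj subset_UNIV])
    thus "distinct ((pre @ [a]) @ map ?t ys')" by (simp only: mp)
    show "distinct ((pre @ [a]) @ xs)" using Cons.prems by simp
    show "length xs = length (map ?t ys')" using Cons.prems ys by simp
    show "set (pre @ [a]) \<subseteq> {..<n}" using Cons.prems by simp
    show "set (map ?t ys') \<subseteq> {..<n}" using Cons.prems ab ys by (auto simp: sw_def)
    show "set xs \<subseteq> {..<n}" using Cons.prems by simp
  qed
  finally show ?case using ys by simp
qed

lemma sym_lists:
  assumes "distinct xs" "distinct ys" "length xs = length ys" "set xs \<subseteq> {..<n}" "set ys \<subseteq> {..<n}"
  shows "card {f \<in> colorings s n c. map f xs = is} = card {f \<in> colorings s n c. map f ys = is}"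
  using sym_aux[of "[]" xs ys n s c "is"] assms by simp


lemma card_as_sum: "finite A \<Longrightarrow> real (card {f \<in> A. Q f}) = (\<Sum>f\<in>A. ind (Q f))"
  by (simp add: sum_ind_card)

lemma sum_const_on:
  fixes g :: "'a \<Rightarrow> real"
  assumes "\<And>x. x \<in> T \<Longrightarrow> g x = k"
  shows "(\<Sum>x\<in>T. g x) = real (card T) * k"
  using assms by simp

lemma sum_ne1: "u < n \<Longrightarrow> (\<Sum>v<n. ind (v \<noteq> u)) = real n - 1"
  using sum_excl1[of "{..<n}" u "\<lambda>_. 1"] by simp

lemma sum_ne2: "u < n \<Longrightarrow> v < n \<Longrightarrow> u \<noteq> v \<Longrightarrow> (\<Sum>w<n. ind (w \<noteq> u \<and> w \<noteq> v)) = real n - 2"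
proof -
  assume a: "u < n" "v < n" "u \<noteq> v"
  have "(\<Sum>w<n. ind (w \<noteq> u \<and> w \<noteq> v)) = (\<Sum>w<n. ind (w \<noteq> u) * ind (w \<noteq> v))"
    by (simp add: ind_mult)
  also have "\<dots> = (\<Sum>w<n. ind (w \<noteq> u)) - ind (v \<noteq> u)"
    using sum_excl1[of "{..<n}" v "\<lambda>w. ind (w \<noteq> u)"] a by (simp add: mult.commute)
  finally show ?thesis using a sum_ne1[of u n] by simp
qed

lemma sum_ne3: "u < n \<Longrightarrow> v < n \<Longrightarrow> w < n \<Longrightarrow> distinct [u,v,w] \<Longrightarrow>
   (\<Sum>x<n. ind (x \<noteq> u \<and> x \<noteq> v \<and> x \<noteq> w)) = real n - 3"
proof -
  assume a: "u < n" "v < n" "w < n" "distinct [u,v,w]"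
  have "(\<Sum>x<n. ind (x \<noteq> u \<and> x \<noteq> v \<and> x \<noteq> w)) = (\<Sum>x<n. ind (x \<noteq> w) * ind (x \<noteq> u \<and> x \<noteq> v))"
    by (intro sum.cong) (auto simp: ind_def)
  also have "\<dots> = (\<Sum>x<n. ind (x \<noteq> u \<and> x \<noteq> v)) - ind (w \<noteq> u \<and> w \<noteq> v)"
    using sum_excl1[of "{..<n}" w "\<lambda>x. ind (x \<noteq> u \<and> x \<noteq> v)"] a by simp
  finally show ?thesis using a sum_ne2[of u n v] by simp
qed

lemma count2: "(\<Sum>u<n. \<Sum>v<n. ind (distinct [u,v])) = real n * (real n - 1)"
proof -
  have "(\<Sum>u<n. \<Sum>v<n. ind (distinct [u,v])) = (\<Sum>u<n. real n - 1)"
  proof (intro sum.cong refl)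
    fix u assume "u \<in> {..<n}"
    hence "(\<Sum>v<n. ind (v \<noteq> u)) = real n - 1" by (simp add: sum_ne1)
    thus "(\<Sum>v<n. ind (distinct [u,v])) = real n - 1" by (simp add: eq_commute)
  qed
  thus ?thesis by simp
qed

lemma count3: "(\<Sum>u<n. \<Sum>v<n. \<Sum>w<n. ind (distinct [u,v,w])) = real n * (real n - 1) * (real n - 2)"
proof -
  have "(\<Sum>u<n. \<Sum>v<n. \<Sum>w<n. ind (distinct [u,v,w])) = (\<Sum>u<n. \<Sum>v<n. ind (distinct [u,v]) * (real n - 2))"
  proof (intro sum.cong refl)
    fix u v assume "u \<in> {..<n}" "v \<in> {..<n}"
    thus "(\<Sum>w<n. ind (distinct [u,v,w])) = ind (distinct [u,v]) * (real n - 2)"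
    proof (cases "distinct [u,v]")
      case True
      have "(\<Sum>w<n. ind (distinct [u,v,w])) = (\<Sum>w<n. ind (w \<noteq> u \<and> w \<noteq> v))"
        using True by (intro sum.cong refl) (auto simp: ind_def)
      also have "\<dots> = real n - 2" using sum_ne2[of u n v] True \<open>u \<in> {..<n}\<close> \<open>v \<in> {..<n}\<close> by simp
      finally show ?thesis using True by simp
    next
      case False
      hence nd: "\<And>w. \<not> distinct [u,v,w]" by auto
      have "(\<Sum>w<n. ind (distinct [u,v,w])) = 0"
        by (rule sum.neutral) (use nd in \<open>simp only: ind_def of_bool_eq\<close>, simp)
      moreover have "ind (distinct [u,v]) = 0" using False by (simp only: ind_def of_bool_eq)
      ultimately show ?thesis by simp
    qed
  qed
  also have "\<dots> = (\<Sum>u<n. \<Sum>v<n. ind (distinct [u,v])) * (real n - 2)"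
    by (simp add: sum_distrib_right)
  finally show ?thesis by (simp only: count2)
qed

lemma count4: "(\<Sum>u<n. \<Sum>v<n. \<Sum>w<n. \<Sum>x<n. ind (distinct [u,v,w,x]))
    = real n * (real n - 1) * (real n - 2) * (real n - 3)"
proof -
  have "(\<Sum>u<n. \<Sum>v<n. \<Sum>w<n. \<Sum>x<n. ind (distinct [u,v,w,x]))
     = (\<Sum>u<n. \<Sum>v<n. \<Sum>w<n. ind (distinct [u,v,w]) * (real n - 3))"
  proof (intro sum.cong refl)
    fix u v w assume "u \<in> {..<n}" "v \<in> {..<n}" "w \<in> {..<n}"
    thus "(\<Sum>x<n. ind (distinct [u,v,w,x])) = ind (distinct [u,v,w]) * (real n - 3)"
    proof (cases "distinct [u,v,w]")
      case True
      have "(\<Sum>x<n. ind (distinct [u,v,w,x])) = (\<Sum>x<n. ind (x \<noteq> u \<and> x \<noteq> v \<and> x \<noteq> w))"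
        using True by (intro sum.cong refl) (auto simp: ind_def)
      also have "\<dots> = real n - 3" using sum_ne3[of u n v w] True \<open>u \<in> {..<n}\<close> \<open>v \<in> {..<n}\<close> \<open>w \<in> {..<n}\<close> by simp
      finally show ?thesis using True by simp
    next
      case False
      hence nd: "\<And>x. \<not> distinct [u,v,w,x]" by auto
      have "(\<Sum>x<n. ind (distinct [u,v,w,x])) = 0"
        by (rule sum.neutral) (use nd in \<open>simp only: ind_def of_bool_eq\<close>, simp)
      moreover have "ind (distinct [u,v,w]) = 0" using False by (simp only: ind_def of_bool_eq)
      ultimately show ?thesis by simp
    qed
  qed
  also have "\<dots> = (\<Sum>u<n. \<Sum>v<n. \<Sum>w<n. ind (distinct [u,v,w])) * (real n - 3)"
    by (simp add: sum_distrib_right)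
  finally show ?thesis by (simp only: count3)
qed

lemma swap3: "(\<Sum>u\<in>A. \<Sum>v\<in>A. \<Sum>w\<in>A. \<Sum>f\<in>B. g u v w f) = (\<Sum>f\<in>B. \<Sum>u\<in>A. \<Sum>v\<in>A. \<Sum>w\<in>A. g u v w f)"
proof -
  have "(\<Sum>u\<in>A. \<Sum>v\<in>A. \<Sum>w\<in>A. \<Sum>f\<in>B. g u v w f) = (\<Sum>u\<in>A. \<Sum>v\<in>A. \<Sum>f\<in>B. \<Sum>w\<in>A. g u v w f)"
    by (intro sum.cong refl) (rule sum.swap)
  also have "\<dots> = (\<Sum>u\<in>A. \<Sum>f\<in>B. \<Sum>v\<in>A. \<Sum>w\<in>A. g u v w f)"
    by (intro sum.cong refl) (rule sum.swap)
  also have "\<dots> = (\<Sum>f\<in>B. \<Sum>u\<in>A. \<Sum>v\<in>A. \<Sum>w\<in>A. g u v w f)"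
    by (rule sum.swap)
  finally show ?thesis .
qed

lemma swap4: "(\<Sum>u\<in>A. \<Sum>v\<in>A. \<Sum>w\<in>A. \<Sum>x\<in>A. \<Sum>f\<in>B. g u v w x f)
   = (\<Sum>f\<in>B. \<Sum>u\<in>A. \<Sum>v\<in>A. \<Sum>w\<in>A. \<Sum>x\<in>A. g u v w x f)"
proof -
  have "(\<Sum>u\<in>A. \<Sum>v\<in>A. \<Sum>w\<in>A. \<Sum>x\<in>A. \<Sum>f\<in>B. g u v w x f)
     = (\<Sum>u\<in>A. \<Sum>v\<in>A. \<Sum>w\<in>A. \<Sum>f\<in>B. \<Sum>x\<in>A. g u v w x f)"
    by (intro sum.cong refl) (rule sum.swap)
  also have "\<dots> = (\<Sum>f\<in>B. \<Sum>u\<in>A. \<Sum>v\<in>A. \<Sum>w\<in>A. \<Sum>x\<in>A. g u v w x f)"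
    by (rule swap3)
  finally show ?thesis .
qed

lemma ind_mult_le: "0 \<le> y \<Longrightarrow> ind P * y \<le> y"
  by (cases P) auto

lemma ind4_le: "ind (distinct [u,v,w,x]) * ((ind a * ind b) * (ind d * ind e))
   \<le> (ind (distinct [u,v]) * (ind a * ind b)) * (ind (distinct [w,x]) * (ind d * ind e))"
proof (cases "distinct [u,v,w,x]")
  case True
  hence "distinct [u,v]" "distinct [w,x]" by auto
  thus ?thesis using True by (simp add: mult.assoc)
next
  case False
  hence z: "ind (distinct [u,v,w,x]) = 0" by (simp only: ind_def of_bool_eq)
  show ?thesis by (simp only: z mult_zero_left) (intro mult_nonneg_nonneg ind_ge0)
qed

lemma sum3_prod:
  fixes a b d :: "'a \<Rightarrow> real"
  shows "(\<Sum>u\<in>A. \<Sum>v\<in>A. \<Sum>w\<in>A. a u * b v * d w) = sum a A * sum b A * sum d A"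
proof -
  have "(\<Sum>u\<in>A. \<Sum>v\<in>A. \<Sum>w\<in>A. a u * b v * d w) = (\<Sum>u\<in>A. \<Sum>v\<in>A. (a u * b v) * sum d A)"
    by (intro sum.cong refl) (rule sum_distrib_left[symmetric])
  also have "\<dots> = (\<Sum>u\<in>A. (\<Sum>v\<in>A. a u * b v) * sum d A)"
    by (intro sum.cong refl) (rule sum_distrib_right[symmetric])
  also have "\<dots> = (\<Sum>u\<in>A. (a u * sum b A) * sum d A)"
    by (intro sum.cong refl) (simp only: sum_distrib_left)
  also have "\<dots> = sum a A * sum b A * sum d A"
    by (simp only: sum_distrib_right)
  finally show ?thesis .
qed

lemma sum22_prod:
  fixes g h :: "'a \<Rightarrow> 'a \<Rightarrow> real"
  shows "(\<Sum>u\<in>A. \<Sum>v\<in>A. \<Sum>w\<in>A. \<Sum>x\<in>A. g u v * h w x) = (\<Sum>u\<in>A. \<Sum>v\<in>A. g u v) * (\<Sum>w\<in>A. \<Sum>x\<in>A. h w x)"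
proof -
  let ?H = "\<Sum>w\<in>A. \<Sum>x\<in>A. h w x"
  have "(\<Sum>u\<in>A. \<Sum>v\<in>A. \<Sum>w\<in>A. \<Sum>x\<in>A. g u v * h w x) = (\<Sum>u\<in>A. \<Sum>v\<in>A. \<Sum>w\<in>A. g u v * (\<Sum>x\<in>A. h w x))"
    by (intro sum.cong refl) (rule sum_distrib_left[symmetric])
  also have "\<dots> = (\<Sum>u\<in>A. \<Sum>v\<in>A. g u v * ?H)"
    by (intro sum.cong refl) (rule sum_distrib_left[symmetric])
  also have "\<dots> = (\<Sum>u\<in>A. (\<Sum>v\<in>A. g u v) * ?H)"
    by (intro sum.cong refl) (rule sum_distrib_right[symmetric])
  also have "\<dots> = (\<Sum>u\<in>A. \<Sum>v\<in>A. g u v) * ?H"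
    by (rule sum_distrib_right[symmetric])
  finally show ?thesis .
qed

context
  fixes s n :: nat and c :: "nat \<Rightarrow> nat"
  assumes comp: "composition s n c"
begin

abbreviation "Om \<equiv> colorings s n c"
abbreviation "NN \<equiv> real (card (colorings s n c))"

lemma Om_fin: "finite Om" by (rule colorings_finite)
lemma Om_ne: "Om \<noteq> {}" by (rule colorings_nonempty[OF comp])
lemma NN_pos: "NN > 0" using Om_fin Om_ne by (simp add: card_gt_0_iff)

lemma swap_cnt:
  "(\<Sum>u<n. real (card {f \<in> Om. Q u f})) = (\<Sum>f\<in>Om. \<Sum>u<n. ind (Q u f))"
proof -
  have "(\<Sum>u<n. real (card {f \<in> Om. Q u f})) = (\<Sum>u<n. \<Sum>f\<in>Om. ind (Q u f))"
    using Om_fin by (simp add: card_as_sum)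
  also have "\<dots> = (\<Sum>f\<in>Om. \<Sum>u<n. ind (Q u f))" by (rule sum.swap)
  finally show ?thesis .
qed

lemma P1:
  assumes "u < n" "i < s"
  shows "real (card {f \<in> Om. f u = i}) * real n = NN * real (c i)"
proof -
  let ?K = "\<lambda>u. real (card {f \<in> Om. f u = i})"
  have symm: "?K u' = ?K u" if "u' < n" for u'
  proof -
    have "card {f \<in> Om. map f [u'] = [i]} = card {f \<in> Om. map f [u] = [i]}"
      by (rule sym_lists) (use that assms in auto)
    thus ?thesis by simp
  qed
  have "(\<Sum>u'<n. ?K u') = real n * ?K u" using symm by simp
  moreover have "(\<Sum>u'<n. ?K u') = (\<Sum>f\<in>Om. \<Sum>u'<n. ind (f u' = i))" by (rule swap_cnt)
  moreover have "\<dots> = (\<Sum>f\<in>Om. real (c i))" using col_class assms by (intro sum.cong) auto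
  ultimately show ?thesis by (simp add: mult.commute)
qed

lemma P2:
  assumes "u < n" "v < n" "u \<noteq> v" "i < s" "j < s"
  shows "real (card {f \<in> Om. f u = i \<and> f v = j}) * (real n * (real n - 1))
       = NN * (real (c i) * real (c j) - ind (i = j) * real (c i))"
proof -
  let ?K = "\<lambda>u v. real (card {f \<in> Om. f u = i \<and> f v = j})"
  have symm: "?K u' v' = ?K u v" if "u' < n" "v' < n" "u' \<noteq> v'" for u' v'
  proof -
    have "card {f \<in> Om. map f [u',v'] = [i,j]} = card {f \<in> Om. map f [u,v] = [i,j]}"
      by (rule sym_lists) (use that assms in auto)
    thus ?thesis by simp
  qed
  have "(\<Sum>u'<n. \<Sum>v'<n. ind (v' \<noteq> u') * ?K u' v') = (\<Sum>u'<n. \<Sum>v'<n. ind (v' \<noteq> u') * ?K u v)"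
    using symm by (intro sum.cong refl) (auto simp: ind_def)
  also have "\<dots> = (\<Sum>u'<n. (real n - 1) * ?K u v)"
    by (intro sum.cong refl) (simp add: sum_distrib_right[symmetric] sum_ne1)
  also have "\<dots> = ?K u v * (real n * (real n - 1))" by simp
  finally have L: "(\<Sum>u'<n. \<Sum>v'<n. ind (v' \<noteq> u') * ?K u' v') = ?K u v * (real n * (real n - 1))" .
  have "(\<Sum>u'<n. \<Sum>v'<n. ind (v' \<noteq> u') * ?K u' v')
      = (\<Sum>u'<n. \<Sum>v'<n. \<Sum>f\<in>Om. ind (v' \<noteq> u') * (ind (f u' = i) * ind (f v' = j)))"
    using Om_fin by (simp add: card_as_sum sum_distrib_left ind_mult)
  also have "\<dots> = (\<Sum>f\<in>Om. \<Sum>u'<n. \<Sum>v'<n. ind (v' \<noteq> u') * (ind (f u' = i) * ind (f v' = j)))"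
  proof -
    have "(\<Sum>u'<n. \<Sum>v'<n. \<Sum>f\<in>Om. ind (v' \<noteq> u') * (ind (f u' = i) * ind (f v' = j)))
       = (\<Sum>u'<n. \<Sum>f\<in>Om. \<Sum>v'<n. ind (v' \<noteq> u') * (ind (f u' = i) * ind (f v' = j)))"
      by (intro sum.cong refl) (rule sum.swap)
    also have "\<dots> = (\<Sum>f\<in>Om. \<Sum>u'<n. \<Sum>v'<n. ind (v' \<noteq> u') * (ind (f u' = i) * ind (f v' = j)))"
      by (rule sum.swap)
    finally show ?thesis .
  qed
  also have "\<dots> = (\<Sum>f\<in>Om. real (c i) * real (c j) - ind (i = j) * real (c i))"
  proof (rule sum.cong[OF refl])
    fix f assume f: "f \<in> Om"
    have "(\<Sum>u'<n. \<Sum>v'<n. ind (v' \<noteq> u') * (ind (f u' = i) * ind (f v' = j)))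
        = (\<Sum>u'<n. ind (f u' = i) * (\<Sum>v'<n. ind (v' \<noteq> u') * ind (f v' = j)))"
      by (simp add: sum_distrib_left algebra_simps)
    also have "\<dots> = (\<Sum>u'<n. ind (f u' = i) * (real (c j) - ind (f u' = j)))"
      using sum_excl1[of "{..<n}" _ "\<lambda>v'. ind (f v' = j)"] col_class[OF f assms(5)]
      by (intro sum.cong refl) simp
    also have "\<dots> = (\<Sum>u'<n. real (c j) * ind (f u' = i) - ind (i = j) * ind (f u' = i))"
      by (intro sum.cong refl) (auto simp: ind_def)
    also have "\<dots> = real (c j) * (\<Sum>u'<n. ind (f u' = i)) - ind (i = j) * (\<Sum>u'<n. ind (f u' = i))"
      by (simp add: sum_subtractf sum_distrib_left)
    also have "\<dots> = real (c i) * real (c j) - ind (i = j) * real (c i)"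
      using col_class[OF f assms(4)] by simp
    finally show "(\<Sum>u'<n. \<Sum>v'<n. ind (v' \<noteq> u') * (ind (f u' = i) * ind (f v' = j)))
        = real (c i) * real (c j) - ind (i = j) * real (c i)" .
  qed
  also have "\<dots> = NN * (real (c i) * real (c j) - ind (i = j) * real (c i))" by simp
  finally show ?thesis using L by simp
qed

lemma pair_sum:
  assumes f: "f \<in> Om" and "i < s" "j < s"
  shows "(\<Sum>u<n. \<Sum>v<n. ind (distinct [u,v]) * (ind (f u = i) * ind (f v = j)))
       = real (c i) * real (c j) - ind (i = j) * real (c i)"
proof -
  have "(\<Sum>u<n. \<Sum>v<n. ind (distinct [u,v]) * (ind (f u = i) * ind (f v = j)))
      = (\<Sum>u<n. ind (f u = i) * (\<Sum>v<n. ind (v \<noteq> u) * ind (f v = j)))"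
  proof (intro sum.cong refl)
    fix u
    have "(\<Sum>v<n. ind (distinct [u,v]) * (ind (f u = i) * ind (f v = j)))
        = (\<Sum>v<n. ind (f u = i) * (ind (v \<noteq> u) * ind (f v = j)))"
      by (intro sum.cong refl) (auto simp: ind_def)
    thus "(\<Sum>v<n. ind (distinct [u,v]) * (ind (f u = i) * ind (f v = j)))
        = ind (f u = i) * (\<Sum>v<n. ind (v \<noteq> u) * ind (f v = j))"
      by (simp only: sum_distrib_left)
  qed
  also have "\<dots> = (\<Sum>u<n. ind (f u = i) * (real (c j) - ind (f u = j)))"
    using sum_excl1[of "{..<n}" _ "\<lambda>v'. ind (f v' = j)"] col_class[OF f assms(3)]
    by (intro sum.cong refl) simp
  also have "\<dots> = (\<Sum>u<n. real (c j) * ind (f u = i) - ind (i = j) * ind (f u = i))"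
    by (intro sum.cong refl) (auto simp: ind_def)
  also have "\<dots> = real (c j) * (\<Sum>u<n. ind (f u = i)) - ind (i = j) * (\<Sum>u<n. ind (f u = i))"
    by (simp add: sum_subtractf sum_distrib_left)
  also have "\<dots> = real (c i) * real (c j) - ind (i = j) * real (c i)"
    using col_class[OF f assms(2)] by simp
  finally show ?thesis .
qed

lemma P3:
  assumes "distinct [u,v,w]" "u < n" "v < n" "w < n" "i < s"
  shows "real (card {f \<in> Om. f u = i \<and> f v = i \<and> f w = i}) * (real n * (real n - 1) * (real n - 2))
       \<le> NN * real (c i) ^ 3"
proof -
  let ?K = "\<lambda>u v w. real (card {f \<in> Om. f u = i \<and> f v = i \<and> f w = i})"
  have symm: "?K u' v' w' = ?K u v w" if "distinct [u',v',w']" "u' < n" "v' < n" "w' < n" for u' v' w'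
  proof -
    have "card {f \<in> Om. map f [u',v',w'] = [i,i,i]} = card {f \<in> Om. map f [u,v,w] = [i,i,i]}"
      by (rule sym_lists) (use that assms in auto)
    thus ?thesis by simp
  qed
  let ?S = "\<Sum>u'<n. \<Sum>v'<n. \<Sum>w'<n. ind (distinct [u',v',w']) * ?K u' v' w'"
  have "?S = (\<Sum>u'<n. \<Sum>v'<n. \<Sum>w'<n. ind (distinct [u',v',w']) * ?K u v w)"
    using symm by (intro sum.cong refl) (auto simp: ind_def)
  also have "\<dots> = ?K u v w * (real n * (real n - 1) * (real n - 2))"
  proof -
    have "(\<Sum>u'<n. \<Sum>v'<n. \<Sum>w'<n. ind (distinct [u',v',w']) * ?K u v w)
        = (\<Sum>u'<n. \<Sum>v'<n. \<Sum>w'<n. ind (distinct [u',v',w'])) * ?K u v w"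
      by (simp only: sum_distrib_right)
    also have "\<dots> = ?K u v w * (real n * (real n - 1) * (real n - 2))"
      by (subst count3) (rule mult.commute)
    finally show ?thesis .
  qed
  finally have L: "?S = ?K u v w * (real n * (real n - 1) * (real n - 2))" .
  have "?S = (\<Sum>u'<n. \<Sum>v'<n. \<Sum>w'<n. \<Sum>f\<in>Om. ind (distinct [u',v',w']) * (ind (f u' = i) * ind (f v' = i) * ind (f w' = i)))"
    using Om_fin by (simp add: card_as_sum sum_distrib_left ind_mult)
  also have "\<dots> = (\<Sum>f\<in>Om. \<Sum>u'<n. \<Sum>v'<n. \<Sum>w'<n. ind (distinct [u',v',w']) * (ind (f u' = i) * ind (f v' = i) * ind (f w' = i)))"
    by (rule swap3)
  also have "\<dots> \<le> (\<Sum>f\<in>Om. \<Sum>u'<n. \<Sum>v'<n. \<Sum>w'<n. ind (f u' = i) * ind (f v' = i) * ind (f w' = i))"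
    by (intro sum_mono ind_mult_le) simp
  also have "\<dots> = (\<Sum>f\<in>Om. real (c i) ^ 3)"
  proof (rule sum.cong[OF refl])
    fix f assume f: "f \<in> Om"
    have "(\<Sum>u'<n. \<Sum>v'<n. \<Sum>w'<n. ind (f u' = i) * ind (f v' = i) * ind (f w' = i))
        = (\<Sum>u'<n. ind (f u' = i)) * (\<Sum>v'<n. ind (f v' = i)) * (\<Sum>w'<n. ind (f w' = i))"
      by (rule sum3_prod)
    thus "(\<Sum>u'<n. \<Sum>v'<n. \<Sum>w'<n. ind (f u' = i) * ind (f v' = i) * ind (f w' = i)) = real (c i) ^ 3"
      using col_class[OF f assms(5)] by (simp add: power3_eq_cube)
  qed
  also have "\<dots> = NN * real (c i) ^ 3" by simp
  finally show ?thesis using L by simp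
qed

lemma P4:
  assumes "distinct [u,v,w,x]" "u < n" "v < n" "w < n" "x < n" "i < s" "j < s"
  shows "real (card {f \<in> Om. f u = i \<and> f v = i \<and> f w = j \<and> f x = j})
          * (real n * (real n - 1) * (real n - 2) * (real n - 3))
       \<le> NN * ((real (c i) ^ 2 - real (c i)) * (real (c j) ^ 2 - real (c j)))"
proof -
  let ?K = "\<lambda>u v w x. real (card {f \<in> Om. f u = i \<and> f v = i \<and> f w = j \<and> f x = j})"
  have symm: "?K u' v' w' x' = ?K u v w x" if "distinct [u',v',w',x']" "u' < n" "v' < n" "w' < n" "x' < n" for u' v' w' x'
  proof -
    have "card {f \<in> Om. map f [u',v',w',x'] = [i,i,j,j]} = card {f \<in> Om. map f [u,v,w,x] = [i,i,j,j]}"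
      by (rule sym_lists) (use that assms in auto)
    thus ?thesis by simp
  qed
  let ?S = "\<Sum>u'<n. \<Sum>v'<n. \<Sum>w'<n. \<Sum>x'<n. ind (distinct [u',v',w',x']) * ?K u' v' w' x'"
  have "?S = (\<Sum>u'<n. \<Sum>v'<n. \<Sum>w'<n. \<Sum>x'<n. ind (distinct [u',v',w',x']) * ?K u v w x)"
    using symm by (intro sum.cong refl) (auto simp: ind_def)
  also have "\<dots> = ?K u v w x * (real n * (real n - 1) * (real n - 2) * (real n - 3))"
  proof -
    have "(\<Sum>u'<n. \<Sum>v'<n. \<Sum>w'<n. \<Sum>x'<n. ind (distinct [u',v',w',x']) * ?K u v w x)
        = (\<Sum>u'<n. \<Sum>v'<n. \<Sum>w'<n. \<Sum>x'<n. ind (distinct [u',v',w',x'])) * ?K u v w x"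
      by (simp only: sum_distrib_right)
    also have "\<dots> = ?K u v w x * (real n * (real n - 1) * (real n - 2) * (real n - 3))"
      by (subst count4) (rule mult.commute)
    finally show ?thesis .
  qed
  finally have L: "?S = ?K u v w x * (real n * (real n - 1) * (real n - 2) * (real n - 3))" .
  have "?S = (\<Sum>u'<n. \<Sum>v'<n. \<Sum>w'<n. \<Sum>x'<n. \<Sum>f\<in>Om. ind (distinct [u',v',w',x'])
              * ((ind (f u' = i) * ind (f v' = i)) * (ind (f w' = j) * ind (f x' = j))))"
    using Om_fin by (simp add: card_as_sum sum_distrib_left ind_mult)
  also have "\<dots> = (\<Sum>f\<in>Om. \<Sum>u'<n. \<Sum>v'<n. \<Sum>w'<n. \<Sum>x'<n. ind (distinct [u',v',w',x'])
              * ((ind (f u' = i) * ind (f v' = i)) * (ind (f w' = j) * ind (f x' = j))))"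
    by (rule swap4)
  also have "\<dots> \<le> (\<Sum>f\<in>Om. \<Sum>u'<n. \<Sum>v'<n. \<Sum>w'<n. \<Sum>x'<n.
        (ind (distinct [u',v']) * (ind (f u' = i) * ind (f v' = i))) * (ind (distinct [w',x']) * (ind (f w' = j) * ind (f x' = j))))"
    by (intro sum_mono ind4_le)
  also have "\<dots> = (\<Sum>f\<in>Om. (real (c i) ^ 2 - real (c i)) * (real (c j) ^ 2 - real (c j)))"
  proof (rule sum.cong[OF refl])
    fix f assume f: "f \<in> Om"
    have "(\<Sum>u'<n. \<Sum>v'<n. \<Sum>w'<n. \<Sum>x'<n.
        (ind (distinct [u',v']) * (ind (f u' = i) * ind (f v' = i))) * (ind (distinct [w',x']) * (ind (f w' = j) * ind (f x' = j))))
      = (\<Sum>u'<n. \<Sum>v'<n. ind (distinct [u',v']) * (ind (f u' = i) * ind (f v' = i)))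
        * (\<Sum>w'<n. \<Sum>x'<n. ind (distinct [w',x']) * (ind (f w' = j) * ind (f x' = j)))"
      by (rule sum22_prod)
    thus "(\<Sum>u'<n. \<Sum>v'<n. \<Sum>w'<n. \<Sum>x'<n.
        (ind (distinct [u',v']) * (ind (f u' = i) * ind (f v' = i))) * (ind (distinct [w',x']) * (ind (f w' = j) * ind (f x' = j))))
      = (real (c i) ^ 2 - real (c i)) * (real (c j) ^ 2 - real (c j))"
      using pair_sum[OF f assms(6) assms(6)] pair_sum[OF f assms(7) assms(7)] by (simp add: power2_eq_square)
  qed
  also have "\<dots> = NN * ((real (c i) ^ 2 - real (c i)) * (real (c j) ^ 2 - real (c j)))" by simp
  finally show ?thesis using L by simp
qed

end

definition avg :: "'f set \<Rightarrow> ('f \<Rightarrow> real) \<Rightarrow> real" where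
  "avg Sp X = (\<Sum>f\<in>Sp. X f) / real (card Sp)"

definition cov :: "'f set \<Rightarrow> ('f \<Rightarrow> real) \<Rightarrow> ('f \<Rightarrow> real) \<Rightarrow> real" where
  "cov Sp X Y = avg Sp (\<lambda>f. X f * Y f) - avg Sp X * avg Sp Y"

lemma avg_sum: "finite I \<Longrightarrow> avg Sp (\<lambda>f. \<Sum>x\<in>I. Y x f) = (\<Sum>x\<in>I. avg Sp (Y x))"
proof -
  have "(\<Sum>f\<in>Sp. \<Sum>x\<in>I. Y x f) = (\<Sum>x\<in>I. \<Sum>f\<in>Sp. Y x f)" by (rule sum.swap)
  thus ?thesis unfolding avg_def by (simp only: sum_divide_distrib)
qed

lemma var_identity:
  fixes Y :: "'i \<Rightarrow> 'f \<Rightarrow> real"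
  assumes fin: "finite Sp" "Sp \<noteq> {}" "finite I"
  shows "(\<Sum>f\<in>Sp. ((\<Sum>x\<in>I. Y x f) - (\<Sum>x\<in>I. avg Sp (Y x)))^2)
       = real (card Sp) * (\<Sum>x\<in>I. \<Sum>y\<in>I. cov Sp (Y x) (Y y))"
proof -
  let ?N = "real (card Sp)"
  have N: "?N > 0" using fin by (simp add: card_gt_0_iff)
  let ?a = "\<lambda>x. avg Sp (Y x)"
  have "(\<Sum>f\<in>Sp. ((\<Sum>x\<in>I. Y x f) - (\<Sum>x\<in>I. ?a x))^2)
      = (\<Sum>f\<in>Sp. \<Sum>x\<in>I. \<Sum>y\<in>I. (Y x f - ?a x) * (Y y f - ?a y))"
  proof (rule sum.cong[OF refl])
    fix f
    have "((\<Sum>x\<in>I. Y x f) - (\<Sum>x\<in>I. ?a x))^2 = (\<Sum>x\<in>I. Y x f - ?a x) * (\<Sum>y\<in>I. Y y f - ?a y)"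
      by (simp add: power2_eq_square sum_subtractf)
    also have "\<dots> = (\<Sum>x\<in>I. \<Sum>y\<in>I. (Y x f - ?a x) * (Y y f - ?a y))"
      by (rule sum_product)
    finally show "((\<Sum>x\<in>I. Y x f) - (\<Sum>x\<in>I. ?a x))^2 = (\<Sum>x\<in>I. \<Sum>y\<in>I. (Y x f - ?a x) * (Y y f - ?a y))" .
  qed
  also have "\<dots> = (\<Sum>x\<in>I. \<Sum>f\<in>Sp. \<Sum>y\<in>I. (Y x f - ?a x) * (Y y f - ?a y))"
    by (rule sum.swap)
  also have "\<dots> = (\<Sum>x\<in>I. \<Sum>y\<in>I. \<Sum>f\<in>Sp. (Y x f - ?a x) * (Y y f - ?a y))"
    by (intro sum.cong refl) (rule sum.swap)
  also have "\<dots> = (\<Sum>x\<in>I. \<Sum>y\<in>I. ?N * cov Sp (Y x) (Y y))"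
  proof (intro sum.cong refl)
    fix x y
    have sx: "(\<Sum>f\<in>Sp. Y x f) = ?N * ?a x" and sy: "(\<Sum>f\<in>Sp. Y y f) = ?N * ?a y"
      using N by (simp_all add: avg_def)
    have sxy: "(\<Sum>f\<in>Sp. Y x f * Y y f) = ?N * avg Sp (\<lambda>f. Y x f * Y y f)"
      using N by (simp add: avg_def)
    have "(\<Sum>f\<in>Sp. (Y x f - ?a x) * (Y y f - ?a y))
        = (\<Sum>f\<in>Sp. Y x f * Y y f) - ?a y * (\<Sum>f\<in>Sp. Y x f) - ?a x * (\<Sum>f\<in>Sp. Y y f) + ?N * (?a x * ?a y)"
    proof -
      have "\<And>f. (Y x f - ?a x) * (Y y f - ?a y) = (Y x f * Y y f - ?a y * Y x f) - ?a x * Y y f + (?a x * ?a y)"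
        by (simp add: algebra_simps)
      hence "(\<Sum>f\<in>Sp. (Y x f - ?a x) * (Y y f - ?a y))
          = (\<Sum>f\<in>Sp. (Y x f * Y y f - ?a y * Y x f) - ?a x * Y y f + (?a x * ?a y))" by simp
      also have "\<dots> = (\<Sum>f\<in>Sp. Y x f * Y y f) - (\<Sum>f\<in>Sp. ?a y * Y x f) - (\<Sum>f\<in>Sp. ?a x * Y y f) + (\<Sum>f\<in>Sp. ?a x * ?a y)"
        by (simp only: sum.distrib sum_subtractf)
      also have "\<dots> = (\<Sum>f\<in>Sp. Y x f * Y y f) - ?a y * (\<Sum>f\<in>Sp. Y x f) - ?a x * (\<Sum>f\<in>Sp. Y y f) + ?N * (?a x * ?a y)"
        by (simp only: sum_distrib_left[symmetric] sum_constant) (simp add: mult.left_commute)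
      finally show ?thesis .
    qed
    also have "\<dots> = ?N * cov Sp (Y x) (Y y)"
      unfolding sx sy sxy cov_def by (simp add: algebra_simps)
    finally show "(\<Sum>f\<in>Sp. (Y x f - ?a x) * (Y y f - ?a y)) = ?N * cov Sp (Y x) (Y y)" .
  qed
  also have "\<dots> = ?N * (\<Sum>x\<in>I. \<Sum>y\<in>I. cov Sp (Y x) (Y y))"
    by (simp add: sum_distrib_left)
  finally show ?thesis .
qed

lemma chebyshev_count:
  fixes X :: "'f \<Rightarrow> real"
  assumes "finite Sp" "t > 0"
  shows "real (card {f \<in> Sp. t < \<bar>X f - m\<bar>}) * t^2 \<le> (\<Sum>f\<in>Sp. (X f - m)^2)"
proof -
  have "real (card {f \<in> Sp. t < \<bar>X f - m\<bar>}) * t^2 = (\<Sum>f\<in>Sp. ind (t < \<bar>X f - m\<bar>) * t^2)"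
  proof -
    have "(\<Sum>f\<in>Sp. ind (t < \<bar>X f - m\<bar>) * t^2) = (\<Sum>f\<in>Sp. ind (t < \<bar>X f - m\<bar>)) * t^2"
      by (rule sum_distrib_right[symmetric])
    thus ?thesis using assms by (simp add: sum_ind_card)
  qed
  also have "\<dots> \<le> (\<Sum>f\<in>Sp. (X f - m)^2)"
  proof (rule sum_mono)
    fix f
    show "ind (t < \<bar>X f - m\<bar>) * t^2 \<le> (X f - m)^2"
    proof (cases "t < \<bar>X f - m\<bar>")
      case True
      hence "t^2 \<le> \<bar>X f - m\<bar>^2" using assms by (intro power_mono) auto
      thus ?thesis using True by simp
    qed simp
  qed
  finally show ?thesis .
qed

lemma cov_le1:
  assumes "finite Sp" "Sp \<noteq> {}" "\<And>f. f \<in> Sp \<Longrightarrow> 0 \<le> X f \<and> X f \<le> 1" "\<And>f. f \<in> Sp \<Longrightarrow> 0 \<le> Y f \<and> Y f \<le> 1"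
  shows "cov Sp X Y \<le> 1"
proof -
  have N: "real (card Sp) > 0" using assms by (simp add: card_gt_0_iff)
  have "(\<Sum>f\<in>Sp. X f * Y f) \<le> (\<Sum>f\<in>Sp. 1)"
    using assms by (intro sum_mono) (simp add: mult_le_one)
  hence a1: "avg Sp (\<lambda>f. X f * Y f) \<le> 1" using N by (simp add: avg_def)
  have "avg Sp X \<ge> 0" "avg Sp Y \<ge> 0" using assms N unfolding avg_def
    by (auto intro!: divide_nonneg_pos sum_nonneg)
  hence "avg Sp X * avg Sp Y \<ge> 0" by simp
  thus ?thesis using a1 unfolding cov_def by linarith
qed

lemma cov_sum_bound:
  fixes C :: "'i \<Rightarrow> 'i \<Rightarrow> real"
  assumes "finite I"
    and "\<And>x. x \<in> I \<Longrightarrow> C x x \<le> 1"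
    and "\<And>x y. x \<in> I \<Longrightarrow> y \<in> I \<Longrightarrow> x \<noteq> y \<Longrightarrow> adj x y \<Longrightarrow> C x y \<le> g"
    and "\<And>x y. x \<in> I \<Longrightarrow> y \<in> I \<Longrightarrow> x \<noteq> y \<Longrightarrow> \<not> adj x y \<Longrightarrow> C x y \<le> r"
    and "g \<ge> 0" "r \<ge> 0"
  shows "(\<Sum>x\<in>I. \<Sum>y\<in>I. C x y) \<le> real (card I) + g * (\<Sum>x\<in>I. \<Sum>y\<in>I. ind (x \<noteq> y \<and> adj x y)) + r * real (card I)^2"
proof -
  have "(\<Sum>x\<in>I. \<Sum>y\<in>I. C x y) \<le> (\<Sum>x\<in>I. \<Sum>y\<in>I. ind (x = y) + g * ind (x \<noteq> y \<and> adj x y) + r)"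
  proof (intro sum_mono)
    fix x y assume "x \<in> I" "y \<in> I"
    thus "C x y \<le> ind (x = y) + g * ind (x \<noteq> y \<and> adj x y) + r"
    proof (cases "x = y")
      case True
      thus ?thesis using assms(2)[of x] \<open>x \<in> I\<close> assms(5,6) by simp
    next
      case False
      show ?thesis
      proof (cases "adj x y")
        case True
        thus ?thesis using assms(3)[of x y] \<open>x \<in> I\<close> \<open>y \<in> I\<close> False assms(6) by simp
      next
        case F2: False
        thus ?thesis using assms(4)[of x y] \<open>x \<in> I\<close> \<open>y \<in> I\<close> False assms(5) by simp
      qed
    qed
  qed
  also have "\<dots> = (\<Sum>x\<in>I. \<Sum>y\<in>I. ind (x = y)) + g * (\<Sum>x\<in>I. \<Sum>y\<in>I. ind (x \<noteq> y \<and> adj x y)) + r * real (card I)^2"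
    by (simp only: sum.distrib sum_distrib_left[symmetric] sum_constant power2_eq_square) (simp add: mult_ac)
  also have "(\<Sum>x\<in>I. \<Sum>y\<in>I. ind (x = y)) = real (card I)"
  proof -
    have "(\<Sum>x\<in>I. \<Sum>y\<in>I. ind (x = y)) = (\<Sum>x\<in>I. 1)"
    proof (intro sum.cong refl)
      fix x assume "x \<in> I"
      have "(\<Sum>y\<in>I. ind (x = y)) = real (card {y \<in> I. x = y})" using assms(1) by (rule sum_ind_card)
      also have "{y \<in> I. x = y} = {x}" using \<open>x \<in> I\<close> by auto
      finally show "(\<Sum>y\<in>I. ind (x = y)) = 1" by simp
    qed
    thus ?thesis by simp
  qed
  finally show ?thesis .
qed


definition Yi :: "nat \<Rightarrow> nat set \<Rightarrow> (nat \<Rightarrow> nat) \<Rightarrow> real" where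
  "Yi i e f = ind (\<forall>v\<in>e. f v = i)"

definition Yt :: "nat \<Rightarrow> nat set \<Rightarrow> (nat \<Rightarrow> nat) \<Rightarrow> real" where
  "Yt s e f = (\<Sum>i<s. Yi i e f)"

lemma sg_edge: "simple_graph n E \<Longrightarrow> e \<in> E \<Longrightarrow> \<exists>u v. e = {u, v} \<and> u < n \<and> v < n \<and> u \<noteq> v"
  unfolding simple_graph_def by blast

lemma sg_finite: assumes "simple_graph n E" shows "finite E"
proof -
  have "E \<subseteq> (\<lambda>(u,v). {u,v}) ` ({..<n} \<times> {..<n})"
  proof
    fix e assume "e \<in> E"
    then obtain u v where "e = {u,v}" "u < n" "v < n" using sg_edge[OF assms] by blast
    thus "e \<in> (\<lambda>(u,v). {u,v}) ` ({..<n} \<times> {..<n})" by auto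
  qed
  thus ?thesis by (rule finite_subset) simp
qed

lemma sg_sub: "simple_graph n E \<Longrightarrow> e \<in> E \<Longrightarrow> e \<subseteq> {..<n}"
  using sg_edge by fastforce

lemma sg_card: "simple_graph n E \<Longrightarrow> e \<in> E \<Longrightarrow> card e = 2"
  using sg_edge by fastforce

lemma Mi_sum: "simple_graph n E \<Longrightarrow> Mi E i f = (\<Sum>e\<in>E. Yi i e f)"
  unfolding Mi_def Yi_def using sg_finite by (simp add: sum_ind_card)

lemma Mtot_sum: "simple_graph n E \<Longrightarrow> Mtot s E f = (\<Sum>e\<in>E. Yt s e f)"
proof -
  assume sg: "simple_graph n E"
  have "Mtot s E f = (\<Sum>i<s. \<Sum>e\<in>E. Yi i e f)" unfolding Mtot_def using Mi_sum[OF sg] by simp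
  also have "\<dots> = (\<Sum>e\<in>E. \<Sum>i<s. Yi i e f)" by (rule sum.swap)
  finally show ?thesis unfolding Yt_def .
qed

lemma Yi_edge: "Yi i {a,b} f = ind (f a = i \<and> f b = i)"
  by (simp add: Yi_def)

lemma Yi_01: "0 \<le> Yi i e f \<and> Yi i e f \<le> 1" by (simp add: Yi_def)

lemma Yt_edge:
  assumes "f \<in> colorings s n c" "a < n"
  shows "Yt s {a,b} f = ind (f a = f b)"
proof -
  have fa: "f a < s" using col_lt assms by blast
  have "Yt s {a,b} f = (\<Sum>i<s. if i = f a then ind (f b = f a) else 0)"
    unfolding Yt_def Yi_edge by (intro sum.cong refl) (auto simp: ind_def)
  also have "\<dots> = ind (f b = f a)" using fa by (simp add: sum.delta)
  finally show ?thesis by (simp add: eq_commute)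
qed

lemma Yt_01:
  assumes "simple_graph n E" "e \<in> E" "f \<in> colorings s n c"
  shows "0 \<le> Yt s e f \<and> Yt s e f \<le> 1"
proof -
  obtain a b where "e = {a,b}" "a < n" using sg_edge[OF assms(1,2)] by blast
  thus ?thesis using Yt_edge[OF assms(3)] by simp
qed

lemma degree_sum: "simple_graph n E \<Longrightarrow> v < n \<Longrightarrow> real (degree E v) = (\<Sum>e\<in>E. ind (v \<in> e))"
  unfolding degree_def using sg_finite by (simp add: sum_ind_card)

lemma handshake:
  assumes "simple_graph n E"
  shows "(\<Sum>v<n. real (degree E v)) = 2 * real (card E)"
proof -
  have "(\<Sum>v<n. real (degree E v)) = (\<Sum>v<n. \<Sum>e\<in>E. ind (v \<in> e))"
    using degree_sum[OF assms] by simp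
  also have "\<dots> = (\<Sum>e\<in>E. \<Sum>v<n. ind (v \<in> e))" by (rule sum.swap)
  also have "\<dots> = (\<Sum>e\<in>E. 2)"
  proof (rule sum.cong[OF refl])
    fix e assume e: "e \<in> E"
    have "(\<Sum>v<n. ind (v \<in> e)) = real (card {v \<in> {..<n}. v \<in> e})" by (simp add: sum_ind_card)
    also have "{v \<in> {..<n}. v \<in> e} = e" using sg_sub[OF assms e] by auto
    finally show "(\<Sum>v<n. ind (v \<in> e)) = 2" using sg_card[OF assms e] by simp
  qed
  finally show ?thesis by simp
qed

lemma sigma2_pairs:
  assumes "simple_graph n E"
  shows "Sigma2 n E = (\<Sum>e\<in>E. \<Sum>e'\<in>E. \<Sum>v<n. ind (v \<in> e) * ind (v \<in> e'))"
proof -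
  have "Sigma2 n E = (\<Sum>v<n. (\<Sum>e\<in>E. ind (v \<in> e)) * (\<Sum>e'\<in>E. ind (v \<in> e')))"
    unfolding Sigma2_def using degree_sum[OF assms] by (simp add: power2_eq_square)
  also have "\<dots> = (\<Sum>v<n. \<Sum>e\<in>E. \<Sum>e'\<in>E. ind (v \<in> e) * ind (v \<in> e'))"
    by (simp only: sum_product)
  also have "\<dots> = (\<Sum>e\<in>E. \<Sum>v<n. \<Sum>e'\<in>E. ind (v \<in> e) * ind (v \<in> e'))"
    by (rule sum.swap)
  also have "\<dots> = (\<Sum>e\<in>E. \<Sum>e'\<in>E. \<Sum>v<n. ind (v \<in> e) * ind (v \<in> e'))"
    by (intro sum.cong refl) (rule sum.swap)
  finally show ?thesis .
qed

lemma adj_count: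
  assumes "simple_graph n E"
  shows "(\<Sum>e\<in>E. \<Sum>e'\<in>E. ind (e \<noteq> e' \<and> e \<inter> e' \<noteq> {})) \<le> Sigma2 n E"
proof -
  have "(\<Sum>e\<in>E. \<Sum>e'\<in>E. ind (e \<noteq> e' \<and> e \<inter> e' \<noteq> {})) \<le> (\<Sum>e\<in>E. \<Sum>e'\<in>E. \<Sum>v<n. ind (v \<in> e) * ind (v \<in> e'))"
  proof (intro sum_mono)
    fix e e' assume e: "e \<in> E" and e': "e' \<in> E"
    show "ind (e \<noteq> e' \<and> e \<inter> e' \<noteq> {}) \<le> (\<Sum>v<n. ind (v \<in> e) * ind (v \<in> e'))"
    proof (cases "e \<inter> e' = {}")
      case True thus ?thesis by (simp add: sum_nonneg)
    next
      case False
      then obtain v where v: "v \<in> e" "v \<in> e'" by blast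
      hence vn: "v < n" using sg_sub[OF assms e] by auto
      have "ind (v \<in> e) * ind (v \<in> e') \<le> (\<Sum>v<n. ind (v \<in> e) * ind (v \<in> e'))"
        by (rule member_le_sum) (use vn in auto)
      hence "1 \<le> (\<Sum>v<n. ind (v \<in> e) * ind (v \<in> e'))" using v by simp
      moreover have "ind (e \<noteq> e' \<and> e \<inter> e' \<noteq> {}) \<le> 1" by simp
      ultimately show ?thesis by linarith
    qed
  qed
  thus ?thesis using sigma2_pairs[OF assms] by simp
qed

lemma sigma2_le:
  assumes "simple_graph n E"
  shows "Sigma2 n E \<le> 2 * real (card E)^2"
proof -
  have "Sigma2 n E \<le> (\<Sum>e\<in>E. \<Sum>e'\<in>E. 2)"
    unfolding sigma2_pairs[OF assms]
  proof (intro sum_mono)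
    fix e e' assume e: "e \<in> E" and e': "e' \<in> E"
    have "(\<Sum>v<n. ind (v \<in> e) * ind (v \<in> e')) \<le> (\<Sum>v<n. ind (v \<in> e))"
      by (intro sum_mono) (simp add: ind_def)
    also have "\<dots> = real (card {v \<in> {..<n}. v \<in> e})" by (simp add: sum_ind_card)
    also have "{v \<in> {..<n}. v \<in> e} = e" using sg_sub[OF assms e] by auto
    finally show "(\<Sum>v<n. ind (v \<in> e) * ind (v \<in> e')) \<le> 2" using sg_card[OF assms e] by simp
  qed
  thus ?thesis by (simp add: power2_eq_square)
qed

lemma maxdeg:
  assumes "simple_graph n E" "n > 0"
  shows "\<exists>h<n. Sigma2 n E \<le> 2 * real (card E) * real (degree E h)"
proof -
  obtain h where h: "h < n" "\<forall>v<n. degree E v \<le> degree E h"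
  proof -
    have "finite (degree E ` {..<n})" "degree E ` {..<n} \<noteq> {}" using assms by auto
    hence "Max (degree E ` {..<n}) \<in> degree E ` {..<n}" by (rule Max_in)
    then obtain h where "h < n" "degree E h = Max (degree E ` {..<n})" by auto
    moreover have "\<forall>v<n. degree E v \<le> Max (degree E ` {..<n})" by simp
    ultimately show ?thesis using that[of h] by simp
  qed
  have "Sigma2 n E = (\<Sum>v<n. real (degree E v) * real (degree E v))"
    by (simp add: Sigma2_def power2_eq_square)
  also have "\<dots> \<le> (\<Sum>v<n. real (degree E v) * real (degree E h))"
    using h by (intro sum_mono mult_left_mono) auto
  also have "\<dots> = 2 * real (card E) * real (degree E h)"
    using handshake[OF assms(1)] by (simp add: sum_distrib_right[symmetric])
  finally show ?thesis using h by blast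
qed

lemma edge_pair_cases:
  assumes "simple_graph n E" "e \<in> E" "e' \<in> E" "e \<noteq> e'"
  shows "(e \<inter> e' \<noteq> {} \<and> (\<exists>a b d. distinct [a,b,d] \<and> a < n \<and> b < n \<and> d < n \<and> e = {a,b} \<and> e' = {a,d}))
       \<or> (e \<inter> e' = {} \<and> (\<exists>u v w x. distinct [u,v,w,x] \<and> u < n \<and> v < n \<and> w < n \<and> x < n \<and> e = {u,v} \<and> e' = {w,x}))"
proof -
  obtain u v where e: "e = {u,v}" "u < n" "v < n" "u \<noteq> v" using sg_edge[OF assms(1,2)] by blast
  obtain w x where e': "e' = {w,x}" "w < n" "x < n" "w \<noteq> x" using sg_edge[OF assms(1,3)] by blast
  show ?thesis
  proof (cases "e \<inter> e' = {}")
    case True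
    hence "u \<noteq> w" "u \<noteq> x" "v \<noteq> w" "v \<noteq> x" using e(1) e'(1) by blast+
    hence "distinct [u,v,w,x]" using e(4) e'(4) by simp
    thus ?thesis using True e e' by blast
  next
    case False
    have ne1: "\<not> (u = w \<and> v = x)" using assms(4) e(1) e'(1) by blast
    have ne2: "\<not> (u = x \<and> v = w)" using assms(4) e(1) e'(1) by (auto simp: insert_commute)
    have "\<exists>a b d. distinct [a,b,d] \<and> a < n \<and> b < n \<and> d < n \<and> e = {a,b} \<and> e' = {a,d}"
    proof (cases "u = w")
      case True
      hence "distinct [u,v,x]" using e(4) e'(4) ne1 by simp
      moreover have "e' = {u,x}" using True e'(1) by simp
      ultimately show ?thesis using e e' by blast
    next
      case F1: False
      show ?thesis
      proof (cases "u = x")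
        case True
        hence "distinct [u,v,w]" using e(4) F1 ne2 by simp
        moreover have "e' = {u,w}" using True e'(1) by (simp add: insert_commute)
        ultimately show ?thesis using e e' by blast
      next
        case F2: False
        have "v = w \<or> v = x" using False e(1) e'(1) F1 F2 by blast
        thus ?thesis
        proof
          assume vw: "v = w"
          hence "distinct [v,u,x]" using e(4) e'(4) F2 by simp
          moreover have "e = {v,u}" "e' = {v,x}" using vw e(1) e'(1) by (simp_all add: insert_commute)
          ultimately show ?thesis using e e' by blast
        next
          assume vx: "v = x"
          hence "distinct [v,u,w]" using e(4) e'(4) F1 by auto
          moreover have "e = {v,u}" "e' = {v,w}" using vx e(1) e'(1) by (simp_all add: insert_commute)
          ultimately show ?thesis using e e' by blast
        qed
      qed
    qed
    thus ?thesis using False by blast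
  qed
qed


definition D2 :: "nat \<Rightarrow> real" where "D2 n = real n * (real n - 1)"
definition D3 :: "nat \<Rightarrow> real" where "D3 n = real n * (real n - 1) * (real n - 2)"
definition D4 :: "nat \<Rightarrow> real" where "D4 n = real n * (real n - 1) * (real n - 2) * (real n - 3)"
definition qq :: "nat \<Rightarrow> (nat \<Rightarrow> nat) \<Rightarrow> nat \<Rightarrow> real" where
  "qq n c i = (real (c i) ^ 2 - real (c i)) / D2 n"
definition QQ :: "nat \<Rightarrow> nat \<Rightarrow> (nat \<Rightarrow> nat) \<Rightarrow> real" where
  "QQ s n c = (\<Sum>i<s. qq n c i)"
definition rho :: "nat \<Rightarrow> real" where "rho n = D2 n ^ 2 / D4 n - 1"
definition gam :: "nat \<Rightarrow> nat \<Rightarrow> (nat \<Rightarrow> nat) \<Rightarrow> real" where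
  "gam s n c = (\<Sum>i<s. real (c i) ^ 3) / D3 n - QQ s n c ^ 2"

lemma avg_ind: "avg A (\<lambda>f. ind (P f)) = real (card {f \<in> A. P f}) / real (card A)"
  unfolding avg_def by (cases "finite A") (simp_all add: sum_ind_card)

lemma D4_pos: "n \<ge> 4 \<Longrightarrow> D4 n > 0" unfolding D4_def by simp
lemma D3_pos: "n \<ge> 3 \<Longrightarrow> D3 n > 0" unfolding D3_def by simp
lemma D2_pos: "n \<ge> 2 \<Longrightarrow> D2 n > 0" unfolding D2_def by simp

lemma rho_nonneg: "n \<ge> 4 \<Longrightarrow> rho n \<ge> 0"
proof -
  assume n: "n \<ge> 4"
  have "D4 n \<le> D2 n ^ 2"
  proof -
    have "(real n - 2) * (real n - 3) \<le> real n * (real n - 1)" using n by (simp add: algebra_simps)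
    moreover have "D2 n \<ge> 0" using n unfolding D2_def by simp
    ultimately have "D2 n * ((real n - 2) * (real n - 3)) \<le> D2 n * (real n * (real n - 1))"
      by (rule mult_left_mono)
    thus ?thesis unfolding D4_def D2_def by (simp add: power2_eq_square mult.assoc)
  qed
  thus ?thesis unfolding rho_def using D4_pos[OF n] by (simp add: field_simps)
qed

context
  fixes s n :: nat and c :: "nat \<Rightarrow> nat"
  assumes comp: "composition s n c"
begin

abbreviation "OM \<equiv> colorings s n c"
abbreviation "NM \<equiv> real (card (colorings s n c))"

lemma c_le_n: "i < s \<Longrightarrow> c i \<le> n"
proof -
  assume "i < s"
  hence "c i \<le> (\<Sum>j<s. c j)" by (intro member_le_sum) auto
  thus ?thesis using comp unfolding composition_def by simp
qed

lemma sum_c: "(\<Sum>i<s. real (c i)) = real n"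
  using comp unfolding composition_def by (metis of_nat_sum)

lemma qq_nonneg: "0 \<le> qq n c i"
proof -
  have "real (c i) \<le> real (c i) ^ 2"
    by (cases "c i") (simp_all add: power2_eq_square)
  moreover have "D2 n \<ge> 0"
  proof (cases "n = 0")
    case False
    hence "real n - 1 \<ge> 0" by simp
    thus ?thesis unfolding D2_def by (intro mult_nonneg_nonneg) auto
  qed (simp add: D2_def)
  ultimately show ?thesis unfolding qq_def by simp
qed

lemma QQ_le1: "QQ s n c \<le> 1"
proof (cases "n \<ge> 2")
  case False
  hence "n = 0 \<or> n = 1" by auto
  hence "D2 n = 0" unfolding D2_def by auto
  thus ?thesis unfolding QQ_def qq_def by simp
next
  case True
  have "(\<Sum>i<s. real (c i) ^ 2 - real (c i)) \<le> (\<Sum>i<s. real (c i) * (real n - 1))"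
  proof (intro sum_mono)
    fix i assume "i \<in> {..<s}"
    hence "real (c i) \<le> real n" using c_le_n by simp
    hence "real (c i) * real (c i) \<le> real (c i) * real n" by (intro mult_left_mono) auto
    thus "real (c i) ^ 2 - real (c i) \<le> real (c i) * (real n - 1)"
      by (simp add: power2_eq_square algebra_simps)
  qed
  also have "\<dots> = D2 n" unfolding D2_def using sum_c by (simp add: sum_distrib_right[symmetric])
  finally have "(\<Sum>i<s. real (c i) ^ 2 - real (c i)) / D2 n \<le> 1"
    using D2_pos[OF True] by simp
  thus ?thesis unfolding QQ_def qq_def by (simp add: sum_divide_distrib)
qed

lemma QQ_nonneg: "0 \<le> QQ s n c"
  unfolding QQ_def by (intro sum_nonneg qq_nonneg)

lemma qq_le1: "i < s \<Longrightarrow> qq n c i \<le> 1"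
proof -
  assume "i < s"
  hence "qq n c i \<le> QQ s n c" unfolding QQ_def by (intro member_le_sum qq_nonneg) auto
  thus ?thesis using QQ_le1 by simp
qed

lemma avg_Yi_edge:
  assumes "a < n" "b < n" "a \<noteq> b" "i < s"
  shows "avg OM (Yi i {a,b}) = qq n c i"
proof -
  have n2: "n \<ge> 2" using assms by auto
  have "real (card {f \<in> OM. f a = i \<and> f b = i}) * D2 n = NM * (real (c i) ^ 2 - real (c i))"
    using P2[OF comp assms(1-3) assms(4) assms(4)] unfolding D2_def by (simp add: power2_eq_square)
  hence "real (card {f \<in> OM. f a = i \<and> f b = i}) / NM = qq n c i"
    using NN_pos[OF comp] D2_pos[OF n2] unfolding qq_def by (simp add: field_simps)
  moreover have "avg OM (Yi i {a,b}) = real (card {f \<in> OM. f a = i \<and> f b = i}) / NM"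
    unfolding Yi_edge avg_ind by simp
  ultimately show ?thesis by simp
qed

lemma avg_Yt_edge:
  assumes "a < n" "b < n" "a \<noteq> b"
  shows "avg OM (Yt s {a,b}) = QQ s n c"
proof -
  have "avg OM (Yt s {a,b}) = (\<Sum>i<s. avg OM (Yi i {a,b}))"
    unfolding Yt_def by (rule avg_sum) simp
  also have "\<dots> = QQ s n c" unfolding QQ_def using avg_Yi_edge[OF assms] by simp
  finally show ?thesis .
qed

lemma avg_mono_sum:
  assumes "\<And>f. f \<in> OM \<Longrightarrow> X f = (\<Sum>k\<in>K. ind (P k f))" "finite K"
    "\<And>k. k \<in> K \<Longrightarrow> real (card {f \<in> OM. P k f}) \<le> NM * B k"
  shows "avg OM X \<le> (\<Sum>k\<in>K. B k)"
proof -
  have "avg OM X = avg OM (\<lambda>f. \<Sum>k\<in>K. ind (P k f))"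
    unfolding avg_def using assms(1) by simp
  also have "\<dots> = (\<Sum>k\<in>K. avg OM (\<lambda>f. ind (P k f)))" by (rule avg_sum) fact
  also have "\<dots> \<le> (\<Sum>k\<in>K. B k)"
  proof (intro sum_mono)
    fix k assume "k \<in> K"
    thus "avg OM (\<lambda>f. ind (P k f)) \<le> B k"
      using assms(3)[of k] NN_pos[OF comp] unfolding avg_ind by (simp add: field_simps)
  qed
  finally show ?thesis .
qed

lemma cov_Yi_disj:
  assumes "distinct [u,v,w,x]" "u < n" "v < n" "w < n" "x < n" "i < s"
  shows "cov OM (Yi i {u,v}) (Yi i {w,x}) \<le> rho n"
proof -
  have n4: "n \<ge> 4"
  proof -
    have "{u,v,w,x} \<subseteq> {..<n}" using assms by auto
    hence "card {u,v,w,x} \<le> n" by (metis card_lessThan card_mono finite_lessThan)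
    moreover have "card {u,v,w,x} = 4" using assms(1) by simp
    ultimately show ?thesis by simp
  qed
  let ?q = "qq n c i"
  have A: "avg OM (\<lambda>f. Yi i {u,v} f * Yi i {w,x} f) \<le> (\<Sum>k\<in>{()}. ?q^2 * (D2 n ^ 2 / D4 n))"
  proof (rule avg_mono_sum[where P="\<lambda>_ f. f u = i \<and> f v = i \<and> f w = i \<and> f x = i"])
    show "\<And>f. f \<in> OM \<Longrightarrow> Yi i {u,v} f * Yi i {w,x} f = (\<Sum>k\<in>{()}. ind (f u = i \<and> f v = i \<and> f w = i \<and> f x = i))"
      by (simp add: Yi_edge ind_mult conj_assoc)
    have "real (card {f \<in> OM. f u = i \<and> f v = i \<and> f w = i \<and> f x = i}) * D4 n
        \<le> NM * ((real (c i) ^ 2 - real (c i)) * (real (c i) ^ 2 - real (c i)))"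
      using P4[OF comp assms(1-5) assms(6) assms(6)] unfolding D4_def by simp
    moreover have "(real (c i) ^ 2 - real (c i)) = ?q * D2 n"
      using D2_pos[of n] n4 unfolding qq_def by simp
    ultimately have "real (card {f \<in> OM. f u = i \<and> f v = i \<and> f w = i \<and> f x = i}) * D4 n
        \<le> NM * (?q^2 * D2 n ^ 2)" by (simp add: power2_eq_square mult_ac)
    thus "\<And>k. k \<in> {()} \<Longrightarrow> real (card {f \<in> OM. f u = i \<and> f v = i \<and> f w = i \<and> f x = i}) \<le> NM * (?q^2 * (D2 n ^ 2 / D4 n))"
      using D4_pos[OF n4] by (simp add: field_simps)
  qed simp
  have "cov OM (Yi i {u,v}) (Yi i {w,x}) \<le> ?q^2 * (D2 n ^ 2 / D4 n) - ?q * ?q"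
    unfolding cov_def using A avg_Yi_edge[of u v i] avg_Yi_edge[of w x i] assms by simp
  also have "\<dots> = ?q^2 * rho n" unfolding rho_def by (simp add: algebra_simps power2_eq_square)
  also have "\<dots> \<le> 1 * rho n"
  proof (rule mult_right_mono)
    show "?q^2 \<le> 1" using qq_nonneg qq_le1[OF assms(6)] by (simp add: power_le_one)
    show "0 \<le> rho n" by (rule rho_nonneg[OF n4])
  qed
  finally show ?thesis by simp
qed

lemma cov_Yt_disj:
  assumes "distinct [u,v,w,x]" "u < n" "v < n" "w < n" "x < n"
  shows "cov OM (Yt s {u,v}) (Yt s {w,x}) \<le> rho n"
proof -
  have n4: "n \<ge> 4"
  proof -
    have "{u,v,w,x} \<subseteq> {..<n}" using assms by auto
    hence "card {u,v,w,x} \<le> n" by (metis card_lessThan card_mono finite_lessThan)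
    moreover have "card {u,v,w,x} = 4" using assms(1) by simp
    ultimately show ?thesis by simp
  qed
  let ?R = "D2 n ^ 2 / D4 n"
  let ?K = "{..<s} \<times> {..<s}"
  have A: "avg OM (\<lambda>f. Yt s {u,v} f * Yt s {w,x} f) \<le> (\<Sum>k\<in>?K. qq n c (fst k) * qq n c (snd k) * ?R)"
  proof (rule avg_mono_sum[where P="\<lambda>k f. f u = fst k \<and> f v = fst k \<and> f w = snd k \<and> f x = snd k"])
    fix f
    have "Yt s {u,v} f * Yt s {w,x} f = (\<Sum>i<s. \<Sum>j<s. Yi i {u,v} f * Yi j {w,x} f)"
      unfolding Yt_def by (rule sum_product)
    also have "\<dots> = (\<Sum>k\<in>?K. Yi (fst k) {u,v} f * Yi (snd k) {w,x} f)"
      by (simp add: sum.cartesian_product prod.case_eq_if)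
    also have "\<dots> = (\<Sum>k\<in>?K. ind (f u = fst k \<and> f v = fst k \<and> f w = snd k \<and> f x = snd k))"
      by (intro sum.cong refl) (simp add: Yi_edge ind_mult conj_assoc)
    finally show "Yt s {u,v} f * Yt s {w,x} f = (\<Sum>k\<in>?K. ind (f u = fst k \<and> f v = fst k \<and> f w = snd k \<and> f x = snd k))" .
  next
    fix k assume k: "k \<in> ?K"
    obtain i j where ij: "k = (i,j)" "i < s" "j < s" using k by auto
    have "real (card {f \<in> OM. f u = i \<and> f v = i \<and> f w = j \<and> f x = j}) * D4 n
        \<le> NM * ((real (c i) ^ 2 - real (c i)) * (real (c j) ^ 2 - real (c j)))"
      using P4[OF comp assms(1-5) ij(2) ij(3)] unfolding D4_def by simp
    moreover have "(real (c i) ^ 2 - real (c i)) = qq n c i * D2 n"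
      "(real (c j) ^ 2 - real (c j)) = qq n c j * D2 n"
      using D2_pos[of n] n4 unfolding qq_def by simp_all
    ultimately have "real (card {f \<in> OM. f u = i \<and> f v = i \<and> f w = j \<and> f x = j}) * D4 n
        \<le> NM * (qq n c i * qq n c j * D2 n ^ 2)" by (simp add: power2_eq_square mult_ac)
    hence "real (card {f \<in> OM. f u = i \<and> f v = i \<and> f w = j \<and> f x = j}) \<le> NM * (qq n c i * qq n c j * ?R)"
      using D4_pos[OF n4] by (simp add: field_simps)
    thus "real (card {f \<in> OM. f u = fst k \<and> f v = fst k \<and> f w = snd k \<and> f x = snd k}) \<le> NM * (qq n c (fst k) * qq n c (snd k) * ?R)"
      using ij by simp
  qed simp
  also have "(\<Sum>k\<in>?K. qq n c (fst k) * qq n c (snd k) * ?R) = QQ s n c ^ 2 * ?R"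
  proof -
    have "(\<Sum>k\<in>?K. qq n c (fst k) * qq n c (snd k) * ?R) = (\<Sum>i<s. \<Sum>j<s. qq n c i * qq n c j * ?R)"
      by (simp add: sum.cartesian_product prod.case_eq_if)
    also have "\<dots> = (\<Sum>i<s. \<Sum>j<s. qq n c i * qq n c j) * ?R"
      by (simp only: sum_distrib_right)
    also have "(\<Sum>i<s. \<Sum>j<s. qq n c i * qq n c j) = QQ s n c ^ 2"
      unfolding QQ_def power2_eq_square by (rule sum_product[symmetric])
    finally show ?thesis .
  qed
  finally have A': "avg OM (\<lambda>f. Yt s {u,v} f * Yt s {w,x} f) \<le> QQ s n c ^ 2 * ?R" .
  have "cov OM (Yt s {u,v}) (Yt s {w,x}) \<le> QQ s n c ^ 2 * ?R - QQ s n c * QQ s n c"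
    unfolding cov_def using A' avg_Yt_edge[of u v] avg_Yt_edge[of w x] assms by simp
  also have "\<dots> = QQ s n c ^ 2 * rho n" unfolding rho_def by (simp add: algebra_simps power2_eq_square)
  also have "\<dots> \<le> 1 * rho n"
  proof (rule mult_right_mono)
    show "QQ s n c ^ 2 \<le> 1" using QQ_nonneg QQ_le1 by (simp add: power_le_one)
    show "0 \<le> rho n" by (rule rho_nonneg[OF n4])
  qed
  finally show ?thesis by simp
qed

lemma cov_Yt_adj:
  assumes "distinct [a,b,d]" "a < n" "b < n" "d < n"
  shows "cov OM (Yt s {a,b}) (Yt s {a,d}) \<le> gam s n c"
proof -
  have n3: "n \<ge> 3"
  proof -
    have "{a,b,d} \<subseteq> {..<n}" using assms by auto
    hence "card {a,b,d} \<le> n" by (metis card_lessThan card_mono finite_lessThan)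
    moreover have "card {a,b,d} = 3" using assms(1) by simp
    ultimately show ?thesis by simp
  qed
  have A: "avg OM (\<lambda>f. Yt s {a,b} f * Yt s {a,d} f) \<le> (\<Sum>i<s. real (c i) ^ 3 / D3 n)"
  proof (rule avg_mono_sum[where P="\<lambda>i f. f a = i \<and> f b = i \<and> f d = i"])
    fix f assume f: "f \<in> OM"
    have fa: "f a < s" using col_lt f assms by blast
    have "Yt s {a,b} f * Yt s {a,d} f = ind (f a = f b \<and> f a = f d)"
      using Yt_edge[OF f assms(2), of b] Yt_edge[OF f assms(2), of d] by (simp add: ind_mult)
    also have "\<dots> = (\<Sum>i<s. if i = f a then ind (f a = f b \<and> f a = f d) else 0)"
      using fa by (simp add: sum.delta)
    also have "\<dots> = (\<Sum>i<s. ind (f a = i \<and> f b = i \<and> f d = i))"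
      by (intro sum.cong refl) (auto simp: ind_def)
    finally show "Yt s {a,b} f * Yt s {a,d} f = (\<Sum>i<s. ind (f a = i \<and> f b = i \<and> f d = i))" .
  next
    fix i assume "i \<in> {..<s}"
    hence "real (card {f \<in> OM. f a = i \<and> f b = i \<and> f d = i}) * D3 n \<le> NM * real (c i) ^ 3"
      using P3[OF comp assms(1-4)] unfolding D3_def by simp
    thus "real (card {f \<in> OM. f a = i \<and> f b = i \<and> f d = i}) \<le> NM * (real (c i) ^ 3 / D3 n)"
      using D3_pos[OF n3] by (simp add: field_simps)
  qed simp
  have "cov OM (Yt s {a,b}) (Yt s {a,d}) \<le> (\<Sum>i<s. real (c i) ^ 3 / D3 n) - QQ s n c * QQ s n c"
    unfolding cov_def using A avg_Yt_edge[of a b] avg_Yt_edge[of a d] assms by simp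
  thus ?thesis unfolding gam_def by (simp add: sum_divide_distrib power2_eq_square)
qed

lemma var_bound_gen:
  fixes Y :: "nat set \<Rightarrow> (nat \<Rightarrow> nat) \<Rightarrow> real"
  assumes sg: "simple_graph n E"
    and b01: "\<And>e f. e \<in> E \<Longrightarrow> f \<in> OM \<Longrightarrow> 0 \<le> Y e f \<and> Y e f \<le> 1"
    and adj: "\<And>e e'. e \<in> E \<Longrightarrow> e' \<in> E \<Longrightarrow> e \<noteq> e' \<Longrightarrow> e \<inter> e' \<noteq> {} \<Longrightarrow> cov OM (Y e) (Y e') \<le> g"
    and disj: "\<And>e e'. e \<in> E \<Longrightarrow> e' \<in> E \<Longrightarrow> e \<noteq> e' \<Longrightarrow> e \<inter> e' = {} \<Longrightarrow> cov OM (Y e) (Y e') \<le> r"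
    and g: "g \<ge> 0" and r: "r \<ge> 0"
  shows "(\<Sum>f\<in>OM. ((\<Sum>e\<in>E. Y e f) - (\<Sum>e\<in>E. avg OM (Y e)))^2)
     \<le> NM * (real (card E) + g * Sigma2 n E + r * real (card E)^2)"
proof -
  have fin: "finite E" by (rule sg_finite[OF sg])
  have "(\<Sum>f\<in>OM. ((\<Sum>e\<in>E. Y e f) - (\<Sum>e\<in>E. avg OM (Y e)))^2)
      = NM * (\<Sum>e\<in>E. \<Sum>e'\<in>E. cov OM (Y e) (Y e'))"
    by (rule var_identity[OF colorings_finite Om_ne[OF comp] fin])
  also have "\<dots> \<le> NM * (real (card E) + g * (\<Sum>e\<in>E. \<Sum>e'\<in>E. ind (e \<noteq> e' \<and> e \<inter> e' \<noteq> {})) + r * real (card E)^2)"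
  proof (rule mult_left_mono)
    show "0 \<le> NM" by simp
    show "(\<Sum>e\<in>E. \<Sum>e'\<in>E. cov OM (Y e) (Y e')) \<le> real (card E) + g * (\<Sum>e\<in>E. \<Sum>e'\<in>E. ind (e \<noteq> e' \<and> e \<inter> e' \<noteq> {})) + r * real (card E)^2"
    proof (rule cov_sum_bound[OF fin _ _ _ g r])
      fix e assume "e \<in> E"
      thus "cov OM (Y e) (Y e) \<le> 1" using b01 by (intro cov_le1[OF colorings_finite Om_ne[OF comp]]) auto
    next
      fix e e' assume "e \<in> E" "e' \<in> E" "e \<noteq> e'" "e \<inter> e' \<noteq> {}"
      thus "cov OM (Y e) (Y e') \<le> g" by (rule adj)
    next
      fix e e' assume "e \<in> E" "e' \<in> E" "e \<noteq> e'" "\<not> e \<inter> e' \<noteq> {}"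
      thus "cov OM (Y e) (Y e') \<le> r" using disj by blast
    qed
  qed
  also have "\<dots> \<le> NM * (real (card E) + g * Sigma2 n E + r * real (card E)^2)"
    using adj_count[OF sg] g by (intro mult_left_mono) (auto intro: mult_left_mono)
  finally show ?thesis .
qed

lemma var_Mi:
  assumes sg: "simple_graph n E" and i: "i < s" and n4: "n \<ge> 4"
  shows "(\<Sum>f\<in>OM. (Mi E i f - real (card E) * qq n c i)^2)
     \<le> NM * (real (card E) + Sigma2 n E + rho n * real (card E)^2)"
proof -
  have mu: "(\<Sum>e\<in>E. avg OM (Yi i e)) = real (card E) * qq n c i"
  proof -
    have "(\<Sum>e\<in>E. avg OM (Yi i e)) = (\<Sum>e\<in>E. qq n c i)"
    proof (intro sum.cong refl)
      fix e assume "e \<in> E"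
      then obtain a b where "e = {a,b}" "a < n" "b < n" "a \<noteq> b" using sg_edge[OF sg] by blast
      thus "avg OM (Yi i e) = qq n c i" using avg_Yi_edge i by simp
    qed
    thus ?thesis by simp
  qed
  have "(\<Sum>f\<in>OM. ((\<Sum>e\<in>E. Yi i e f) - (\<Sum>e\<in>E. avg OM (Yi i e)))^2)
     \<le> NM * (real (card E) + 1 * Sigma2 n E + rho n * real (card E)^2)"
  proof (rule var_bound_gen[OF sg])
    fix e f show "0 \<le> Yi i e f \<and> Yi i e f \<le> 1" by (rule Yi_01)
  next
    fix e e' assume "e \<in> E" "e' \<in> E"
    thus "cov OM (Yi i e) (Yi i e') \<le> 1"
      by (intro cov_le1[OF colorings_finite Om_ne[OF comp]]) (auto simp: Yi_01)
  next
    fix e e' assume ee: "e \<in> E" "e' \<in> E" "e \<noteq> e'" "e \<inter> e' = {}"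
    then obtain u v w x where "distinct [u,v,w,x]" "u < n" "v < n" "w < n" "x < n" "e = {u,v}" "e' = {w,x}"
      using edge_pair_cases[OF sg ee(1-3)] by blast
    thus "cov OM (Yi i e) (Yi i e') \<le> rho n" using cov_Yi_disj i by simp
  qed (use rho_nonneg[OF n4] in auto)
  thus ?thesis using Mi_sum[OF sg] mu by simp
qed

lemma var_Mt:
  assumes sg: "simple_graph n E" and n4: "n \<ge> 4" and g: "g \<ge> 0" "g \<ge> 1 \<or> g \<ge> gam s n c"
  shows "(\<Sum>f\<in>OM. (Mtot s E f - real (card E) * QQ s n c)^2)
     \<le> NM * (real (card E) + g * Sigma2 n E + rho n * real (card E)^2)"
proof -
  have mu: "(\<Sum>e\<in>E. avg OM (Yt s e)) = real (card E) * QQ s n c"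
  proof -
    have "(\<Sum>e\<in>E. avg OM (Yt s e)) = (\<Sum>e\<in>E. QQ s n c)"
    proof (intro sum.cong refl)
      fix e assume "e \<in> E"
      then obtain a b where "e = {a,b}" "a < n" "b < n" "a \<noteq> b" using sg_edge[OF sg] by blast
      thus "avg OM (Yt s e) = QQ s n c" using avg_Yt_edge by simp
    qed
    thus ?thesis by simp
  qed
  have "(\<Sum>f\<in>OM. ((\<Sum>e\<in>E. Yt s e f) - (\<Sum>e\<in>E. avg OM (Yt s e)))^2)
     \<le> NM * (real (card E) + g * Sigma2 n E + rho n * real (card E)^2)"
  proof (rule var_bound_gen[OF sg])
    fix e f assume "e \<in> E" "f \<in> OM"
    thus "0 \<le> Yt s e f \<and> Yt s e f \<le> 1" by (rule Yt_01[OF sg])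
  next
    fix e e' assume ee: "e \<in> E" "e' \<in> E" "e \<noteq> e'" "e \<inter> e' \<noteq> {}"
    have c1: "cov OM (Yt s e) (Yt s e') \<le> 1"
      using ee Yt_01[OF sg] by (intro cov_le1[OF colorings_finite Om_ne[OF comp]]) auto
    obtain a b d where "distinct [a,b,d]" "a < n" "b < n" "d < n" "e = {a,b}" "e' = {a,d}"
      using edge_pair_cases[OF sg ee(1-3)] ee(4) by blast
    hence c2: "cov OM (Yt s e) (Yt s e') \<le> gam s n c" using cov_Yt_adj by simp
    show "cov OM (Yt s e) (Yt s e') \<le> g" using g(2) c1 c2 by linarith
  next
    fix e e' assume ee: "e \<in> E" "e' \<in> E" "e \<noteq> e'" "e \<inter> e' = {}"
    then obtain u v w x where "distinct [u,v,w,x]" "u < n" "v < n" "w < n" "x < n" "e = {u,v}" "e' = {w,x}"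
      using edge_pair_cases[OF sg ee(1-3)] by blast
    thus "cov OM (Yt s e) (Yt s e') \<le> rho n" using cov_Yt_disj by simp
  qed (use rho_nonneg[OF n4] g in auto)
  thus ?thesis using Mtot_sum[OF sg] mu by simp
qed

end


definition Yh :: "nat \<Rightarrow> nat \<Rightarrow> nat set \<Rightarrow> (nat \<Rightarrow> nat) \<Rightarrow> real" where
  "Yh h j e f = ind (h \<in> e) * ind (\<forall>v\<in>e. v \<noteq> h \<longrightarrow> f v = j)"

definition Nh :: "nat set set \<Rightarrow> nat \<Rightarrow> nat \<Rightarrow> (nat \<Rightarrow> nat) \<Rightarrow> real" where
  "Nh E h j f = (\<Sum>e\<in>E. Yh h j e f)"

lemma edge_at:
  assumes "simple_graph n E" "e \<in> E" "h \<in> e"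
  shows "\<exists>a. e = {h,a} \<and> a \<noteq> h \<and> a < n"
proof -
  obtain u v where "e = {u,v}" "u < n" "v < n" "u \<noteq> v" using sg_edge[OF assms(1,2)] by blast
  thus ?thesis using assms(3) by (auto simp: insert_commute)
qed

lemma Yh_at: "a \<noteq> h \<Longrightarrow> Yh h j {h,a} f = ind (f a = j)"
  by (auto simp: Yh_def)

lemma Yh_01: "0 \<le> Yh h j e f \<and> Yh h j e f \<le> 1"
  by (auto simp: Yh_def ind_def)

context
  fixes s n :: nat and c :: "nat \<Rightarrow> nat"
  assumes comp: "composition s n c"
begin

abbreviation "OM6 \<equiv> colorings s n c"
abbreviation "NM6 \<equiv> real (card (colorings s n c))"

lemma Yt_mono:
  assumes sg: "simple_graph n E" and e: "e \<in> E" and f: "f \<in> OM6"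
  shows "Yt s e f = ind (\<forall>x\<in>e. \<forall>y\<in>e. f x = f y)"
proof -
  obtain a b where ab: "e = {a,b}" "a < n" using sg_edge[OF sg e] by blast
  have "(\<forall>x\<in>e. \<forall>y\<in>e. f x = f y) \<longleftrightarrow> f a = f b" using ab by auto
  thus ?thesis using Yt_edge[OF f ab(2)] ab by simp
qed

lemma Mtot_mono:
  assumes sg: "simple_graph n E" and f: "f \<in> OM6"
  shows "Mtot s E f = (\<Sum>e\<in>E. ind (\<forall>x\<in>e. \<forall>y\<in>e. f x = f y))"
  unfolding Mtot_sum[OF sg] using Yt_mono[OF sg _ f] by simp

lemma swap_diff:
  assumes sg: "simple_graph n E" and f: "f \<in> OM6" and hw: "h < n" "w < n" "w \<noteq> h"
    and fh: "f h = i" and fw: "f w = j" and ij: "i \<noteq> j"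
  shows "Mtot s E (f \<circ> sw h w) - Mtot s E f \<ge> Nh E h j f - Nh E h i f - 2 * real (degree E w)"
proof -
  let ?g = "f \<circ> sw h w"
  have g: "?g \<in> OM6" by (rule col_sw[OF f hw(1,2)])
  let ?MO = "\<lambda>f e. ind (\<forall>x\<in>e. \<forall>y\<in>e. f x = f y)"
  have pt: "?MO ?g e - ?MO f e \<ge> (Yh h j e f - Yh h i e f) - 2 * ind (w \<in> e)" if e: "e \<in> E" for e
  proof (cases "w \<in> e")
    case True
    have "Yh h j e f - Yh h i e f \<le> 1" using Yh_01[of h j e f] Yh_01[of h i e f] by linarith
    moreover have "?MO ?g e - ?MO f e \<ge> -1" by (simp add: ind_def)
    ultimately show ?thesis using True by simp
  next
    case wF: False
    show ?thesis
    proof (cases "h \<in> e")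
      case False
      have "\<forall>x\<in>e. ?g x = f x" using False wF by (auto simp: sw_def)
      hence "?MO ?g e = ?MO f e" by simp
      moreover have "Yh h j e f = 0" "Yh h i e f = 0" using False by (simp_all add: Yh_def)
      ultimately show ?thesis using wF by simp
    next
      case True
      then obtain a where a: "e = {h,a}" "a \<noteq> h" "a < n" using edge_at[OF sg e] by blast
      have aw: "a \<noteq> w" using wF a by auto
      have ga: "?g a = f a" "?g h = j" using aw a(2) fw by (auto simp: sw_def)
      have "?MO ?g e = ind (f a = j)" using a ga by (auto simp: ind_def)
      moreover have "?MO f e = ind (f a = i)" using a fh by (auto simp: ind_def)
      ultimately show ?thesis using a Yh_at[OF a(2)] wF by simp
    qed
  qed
  have "Mtot s E ?g - Mtot s E f = (\<Sum>e\<in>E. ?MO ?g e - ?MO f e)"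
    using Mtot_mono[OF sg g] Mtot_mono[OF sg f] by (simp add: sum_subtractf)
  also have "\<dots> \<ge> (\<Sum>e\<in>E. (Yh h j e f - Yh h i e f) - 2 * ind (w \<in> e))"
    using pt by (intro sum_mono) auto
  finally have "Mtot s E ?g - Mtot s E f \<ge> (\<Sum>e\<in>E. (Yh h j e f - Yh h i e f) - 2 * ind (w \<in> e))" .
  moreover have "(\<Sum>e\<in>E. (Yh h j e f - Yh h i e f) - 2 * ind (w \<in> e))
      = Nh E h j f - Nh E h i f - 2 * real (degree E w)"
    unfolding Nh_def degree_sum[OF sg hw(2)] by (simp add: sum_subtractf sum_distrib_left)
  ultimately show ?thesis by simp
qed

lemma avg_Yh:
  assumes sg: "simple_graph n E" and e: "e \<in> E" and h: "h < n" and j: "j < s"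
  shows "avg OM6 (Yh h j e) = ind (h \<in> e) * real (c j) / real n"
proof (cases "h \<in> e")
  case True
  then obtain a where a: "e = {h,a}" "a \<noteq> h" "a < n" using edge_at[OF sg e] by blast
  have "Yh h j e = (\<lambda>f. ind (f a = j))" by (rule ext) (simp add: a Yh_at[OF a(2)])
  hence "avg OM6 (Yh h j e) = avg OM6 (\<lambda>f. ind (f a = j))" by simp
  also have "\<dots> = real (card {f \<in> OM6. f a = j}) / NM6" by (rule avg_ind)
  also have "\<dots> = real (c j) / real n"
    using P1[OF comp a(3) j] NN_pos[OF comp] a(3) by (simp add: field_simps)
  finally show ?thesis using True by simp
next
  case False
  hence "Yh h j e = (\<lambda>f. 0)" by (simp add: Yh_def fun_eq_iff)
  thus ?thesis using False by (simp add: avg_def)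
qed

lemma avg_Nh:
  assumes sg: "simple_graph n E" and h: "h < n" and j: "j < s"
  shows "(\<Sum>e\<in>E. avg OM6 (Yh h j e)) = real (degree E h) * real (c j) / real n"
proof -
  have "(\<Sum>e\<in>E. avg OM6 (Yh h j e)) = (\<Sum>e\<in>E. ind (h \<in> e)) * real (c j) / real n"
    using avg_Yh[OF sg _ h j] by (simp add: sum_distrib_right sum_divide_distrib)
  thus ?thesis using degree_sum[OF sg h] by simp
qed

lemma var_Nh:
  assumes sg: "simple_graph n E" and h: "h < n" and j: "j < s"
  shows "(\<Sum>f\<in>OM6. (Nh E h j f - (\<Sum>e\<in>E. avg OM6 (Yh h j e)))^2) \<le> NM6 * real (card E)"
proof -
  have fin: "finite E" by (rule sg_finite[OF sg])
  have "(\<Sum>f\<in>OM6. (Nh E h j f - (\<Sum>e\<in>E. avg OM6 (Yh h j e)))^2)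
      = NM6 * (\<Sum>e\<in>E. \<Sum>e'\<in>E. cov OM6 (Yh h j e) (Yh h j e'))"
    unfolding Nh_def by (rule var_identity[OF colorings_finite Om_ne[OF comp] fin])
  also have "\<dots> \<le> NM6 * (real (card E) + 0 * (\<Sum>e\<in>E. \<Sum>e'\<in>E. ind (e \<noteq> e' \<and> True)) + 0 * real (card E)^2)"
  proof (rule mult_left_mono)
    show "0 \<le> NM6" by simp
    show "(\<Sum>e\<in>E. \<Sum>e'\<in>E. cov OM6 (Yh h j e) (Yh h j e'))
        \<le> real (card E) + 0 * (\<Sum>e\<in>E. \<Sum>e'\<in>E. ind (e \<noteq> e' \<and> True)) + 0 * real (card E)^2"
    proof (rule cov_sum_bound[OF fin])
      fix e assume "e \<in> E"
      show "cov OM6 (Yh h j e) (Yh h j e) \<le> 1"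
        by (rule cov_le1[OF colorings_finite Om_ne[OF comp]]) (simp_all add: Yh_01)
    next
      fix e e' assume ee: "e \<in> E" "e' \<in> E" "e \<noteq> e'"
      show "cov OM6 (Yh h j e) (Yh h j e') \<le> 0"
      proof (cases "h \<in> e \<and> h \<in> e'")
        case False
        hence "(\<lambda>f. Yh h j e f * Yh h j e' f) = (\<lambda>f. 0)" by (auto simp: Yh_def fun_eq_iff)
        hence p0: "avg OM6 (\<lambda>f. Yh h j e f * Yh h j e' f) = 0" by (simp add: avg_def)
        have z: "avg OM6 (Yh h j e) * avg OM6 (Yh h j e') = 0"
          using False avg_Yh[OF sg ee(1) h j] avg_Yh[OF sg ee(2) h j] by auto
        show ?thesis by (simp only: cov_def p0 z)
      next
        case True
        obtain a where a: "e = {h,a}" "a \<noteq> h" "a < n" using edge_at[OF sg ee(1)] True by blast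
        obtain b where b: "e' = {h,b}" "b \<noteq> h" "b < n" using edge_at[OF sg ee(2)] True by blast
        have ab: "a \<noteq> b" using a b ee(3) by auto
        have n2: "n \<ge> 2" using a(2,3) h by linarith
        have "avg OM6 (\<lambda>f. Yh h j e f * Yh h j e' f) = avg OM6 (\<lambda>f. ind (f a = j \<and> f b = j))"
          using a b Yh_at[OF a(2)] Yh_at[OF b(2)] by (simp add: ind_mult)
        also have "\<dots> = real (card {f \<in> OM6. f a = j \<and> f b = j}) / NM6" by (rule avg_ind)
        also have "\<dots> = (real (c j) * real (c j) - real (c j)) / (real n * (real n - 1))"
          using P2[OF comp a(3) b(3) ab j j] NN_pos[OF comp] n2 by (simp add: field_simps)
        finally have A: "avg OM6 (\<lambda>f. Yh h j e f * Yh h j e' f) = (real (c j) * real (c j) - real (c j)) / (real n * (real n - 1))" .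
        have B: "avg OM6 (Yh h j e) = real (c j) / real n" "avg OM6 (Yh h j e') = real (c j) / real n"
          using avg_Yh[OF sg ee(1) h j] avg_Yh[OF sg ee(2) h j] True by simp_all
        have cn: "real (c j) \<le> real n" using c_le_n[OF comp j] by simp
        have "(real (c j) * real (c j) - real (c j)) / (real n * (real n - 1)) \<le> real (c j) / real n * (real (c j) / real n)"
        proof -
          have "(real (c j) * real (c j) - real (c j)) * (real n * real n) \<le> (real (c j) * real (c j)) * (real n * (real n - 1))"
          proof -
            have "real (c j) * real (c j) \<le> real (c j) * real n" using cn by (intro mult_left_mono) auto
            hence "real (c j) * real (c j) * real n \<le> real (c j) * real n * real n" by (intro mult_right_mono) auto
            thus ?thesis by (simp add: algebra_simps)
          qed
          moreover have "real n * (real n - 1) > 0" "real n * real n > 0" using n2 by auto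
          ultimately show ?thesis by (simp add: field_simps)
        qed
        thus ?thesis unfolding cov_def using A B by simp
      qed
    next
      fix e e' assume "e \<in> E" "e' \<in> E" "e \<noteq> e'" "\<not> True"
      thus "cov OM6 (Yh h j e) (Yh h j e') \<le> 0" by simp
    qed simp_all
  qed
  finally show ?thesis by simp
qed

end


lemma part2_n:
  assumes comp: "composition s n c" and sg: "simple_graph n E"
    and h: "h < n" and i: "i < s" and j: "j < s" and ij: "i \<noteq> j"
    and K: "K > 0" and t: "t > 0"
    and gap: "real (degree E h) * (real (c j) - real (c i)) / real n > 2 * K + 2 * t"
    and rj: "real (c j) \<ge> 1 + 2 * real (card E) / K"
  shows "real (card {f \<in> colorings s n c. Mtot s E f \<noteq> mu}) / real (card (colorings s n c))
     \<ge> (real (c i) / real n - 2 * real (card E) / t^2) * (real (c j) - (1 + 2 * real (card E) / K)) / (2 * real n)"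
proof -
  let ?O = "colorings s n c"
  let ?N = "real (card ?O)"
  let ?m = "real (card E)"
  let ?D = "real (card {f \<in> ?O. Mtot s E f \<noteq> mu})"
  let ?r = "1 + 2 * ?m / K"
  define muj where "muj = (\<Sum>e\<in>E. avg ?O (Yh h j e))"
  define mui where "mui = (\<Sum>e\<in>E. avg ?O (Yh h i e))"
  define B where "B f \<longleftrightarrow> 2 * K < Nh E h j f - Nh E h i f" for f
  define W where "W = {w. w < n \<and> w \<noteq> h \<and> real (degree E w) \<le> K}"
  have fin: "finite ?O" by (rule colorings_finite)
  have Npos: "?N > 0" by (rule NN_pos[OF comp])
  have npos: "real n > 0" using h by simp
  have Wsub: "W \<subseteq> {..<n}" unfolding W_def by auto
  have finW: "finite W" using Wsub finite_subset by blast
  have muj: "muj = real (degree E h) * real (c j) / real n" unfolding muj_def by (rule avg_Nh[OF comp sg h j])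
  have mui: "mui = real (degree E h) * real (c i) / real n" unfolding mui_def by (rule avg_Nh[OF comp sg h i])
  have gap2: "muj - mui > 2 * K + 2 * t"
    using gap unfolding muj mui by (simp add: diff_divide_distrib[symmetric] right_diff_distrib)
  have stepA: "real (card {f \<in> ?O. (B f \<and> f h = i) \<and> f w = j}) \<le> 2 * ?D" if w: "w \<in> W" for w
  proof -
    have wn: "w < n" "w \<noteq> h" "real (degree E w) \<le> K" using w unfolding W_def by auto
    have "{f \<in> ?O. (B f \<and> f h = i) \<and> f w = j} \<subseteq> {f \<in> ?O. Mtot s E (f \<circ> sw h w) \<noteq> mu} \<union> {f \<in> ?O. Mtot s E f \<noteq> mu}"
    proof
      fix f assume "f \<in> {f \<in> ?O. (B f \<and> f h = i) \<and> f w = j}"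
      hence f: "f \<in> ?O" "B f" "f h = i" "f w = j" by auto
      have "Mtot s E (f \<circ> sw h w) - Mtot s E f \<ge> Nh E h j f - Nh E h i f - 2 * real (degree E w)"
        by (rule swap_diff[OF comp sg f(1) h wn(1,2) f(3,4) ij])
      hence "Mtot s E (f \<circ> sw h w) \<noteq> Mtot s E f" using f(2) wn(3) unfolding B_def by linarith
      thus "f \<in> {f \<in> ?O. Mtot s E (f \<circ> sw h w) \<noteq> mu} \<union> {f \<in> ?O. Mtot s E f \<noteq> mu}" using f(1) by auto
    qed
    hence "card {f \<in> ?O. (B f \<and> f h = i) \<and> f w = j}
        \<le> card ({f \<in> ?O. Mtot s E (f \<circ> sw h w) \<noteq> mu} \<union> {f \<in> ?O. Mtot s E f \<noteq> mu})"
      by (intro card_mono) (use fin in auto)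
    also have "\<dots> \<le> card {f \<in> ?O. Mtot s E (f \<circ> sw h w) \<noteq> mu} + card {f \<in> ?O. Mtot s E f \<noteq> mu}"
      by (rule card_Un_le)
    also have "card {f \<in> ?O. Mtot s E (f \<circ> sw h w) \<noteq> mu} = card {f \<in> ?O. Mtot s E f \<noteq> mu}"
      by (rule card_sw[OF h wn(1)])
    finally show ?thesis by simp
  qed
  have stepB: "(\<Sum>w\<in>W. real (card {f \<in> ?O. (B f \<and> f h = i) \<and> f w = j}))
      = (\<Sum>f\<in>?O. ind (B f \<and> f h = i) * (\<Sum>w\<in>W. ind (f w = j)))"
  proof -
    have "(\<Sum>w\<in>W. real (card {f \<in> ?O. (B f \<and> f h = i) \<and> f w = j}))
        = (\<Sum>w\<in>W. \<Sum>f\<in>?O. ind (B f \<and> f h = i) * ind (f w = j))"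
      using fin by (simp add: card_as_sum ind_mult)
    also have "\<dots> = (\<Sum>f\<in>?O. \<Sum>w\<in>W. ind (B f \<and> f h = i) * ind (f w = j))"
      by (rule sum.swap)
    also have "\<dots> = (\<Sum>f\<in>?O. ind (B f \<and> f h = i) * (\<Sum>w\<in>W. ind (f w = j)))"
      by (simp only: sum_distrib_left)
    finally show ?thesis .
  qed
  have stepC: "(\<Sum>w\<in>W. ind (f w = j)) \<ge> real (c j) - ?r" if f: "f \<in> ?O" for f
  proof -
    have "real (c j) = (\<Sum>w<n. ind (f w = j))" using col_class[OF f j] by simp
    also have "\<dots> \<le> (\<Sum>w<n. ind (w \<in> W) * ind (f w = j) + ind (w = h) + real (degree E w) / K)"
    proof (rule sum_mono)
      fix w assume wn: "w \<in> {..<n}"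
      show "ind (f w = j) \<le> ind (w \<in> W) * ind (f w = j) + ind (w = h) + real (degree E w) / K"
      proof (cases "w \<in> W")
        case True thus ?thesis using K by simp
      next
        case False
        hence "w = h \<or> real (degree E w) > K" using wn unfolding W_def by auto
        hence dis: "w = h \<or> real (degree E w) > K" .
        have "ind (w = h) + real (degree E w) / K \<ge> 1"
        proof (cases "w = h")
          case True thus ?thesis using K by simp
        next
          case F: False
          hence "real (degree E w) > K" using dis by simp
          hence "real (degree E w) / K > 1" using K by simp
          thus ?thesis using F by simp
        qed
        moreover have "ind (f w = j) \<le> 1" by simp
        moreover have "ind (w \<in> W) * ind (f w = j) = 0" using False by simp
        ultimately show ?thesis by linarith
      qed
    qed
    also have "\<dots> = (\<Sum>w<n. ind (w \<in> W) * ind (f w = j)) + (\<Sum>w<n. ind (w = h)) + (\<Sum>w<n. real (degree E w)) / K"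
      by (simp add: sum.distrib sum_divide_distrib)
    also have "(\<Sum>w<n. ind (w \<in> W) * ind (f w = j)) = (\<Sum>w\<in>W. ind (f w = j))"
    proof -
      have "(\<Sum>w<n. ind (w \<in> W) * ind (f w = j)) = (\<Sum>w<n. if w \<in> W then ind (f w = j) else 0)"
        by (intro sum.cong refl) (simp add: ind_def)
      also have "\<dots> = (\<Sum>w\<in>{w \<in> {..<n}. w \<in> W}. ind (f w = j))"
        by (rule sum.inter_filter[symmetric]) simp
      also have "{w \<in> {..<n}. w \<in> W} = W" using Wsub by auto
      finally show ?thesis .
    qed
    also have "(\<Sum>w<n. ind (w = h)) = 1"
    proof -
      have "(\<Sum>w<n. ind (w = h)) = real (card {w \<in> {..<n}. w = h})" by (rule sum_ind_card) simp
      also have "{w \<in> {..<n}. w = h} = {h}" using h by auto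
      finally show ?thesis by simp
    qed
    also have "(\<Sum>w<n. real (degree E w)) = 2 * ?m" by (rule handshake[OF sg])
    finally show ?thesis by simp
  qed
  have cheb: "real (card {f \<in> ?O. t < \<bar>Nh E h k f - (\<Sum>e\<in>E. avg ?O (Yh h k e))\<bar>}) \<le> ?N * ?m / t^2"
    if k: "k < s" for k
  proof -
    have "real (card {f \<in> ?O. t < \<bar>Nh E h k f - (\<Sum>e\<in>E. avg ?O (Yh h k e))\<bar>}) * t^2
        \<le> (\<Sum>f\<in>?O. (Nh E h k f - (\<Sum>e\<in>E. avg ?O (Yh h k e)))^2)"
      by (rule chebyshev_count[OF fin t])
    also have "\<dots> \<le> ?N * ?m" by (rule var_Nh[OF comp sg h k])
    finally show ?thesis using t by (simp add: field_simps)
  qed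
  have stepE: "(\<Sum>f\<in>?O. ind (B f \<and> f h = i)) \<ge> ?N * (real (c i) / real n - 2 * ?m / t^2)"
  proof -
    have pt: "ind (f h = i) \<le> ind (B f \<and> f h = i) + ind (t < \<bar>Nh E h j f - muj\<bar>) + ind (t < \<bar>Nh E h i f - mui\<bar>)" for f
    proof (cases "B f")
      case True thus ?thesis by (simp add: ind_def)
    next
      case False
      hence "Nh E h j f - Nh E h i f \<le> 2 * K" unfolding B_def by simp
      hence "t < \<bar>Nh E h j f - muj\<bar> \<or> t < \<bar>Nh E h i f - mui\<bar>" using gap2 by linarith
      thus ?thesis by (auto simp: ind_def)
    qed
    have "(\<Sum>f\<in>?O. ind (f h = i)) \<le> (\<Sum>f\<in>?O. ind (B f \<and> f h = i) + ind (t < \<bar>Nh E h j f - muj\<bar>) + ind (t < \<bar>Nh E h i f - mui\<bar>))"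
      using pt by (intro sum_mono) auto
    also have "\<dots> = (\<Sum>f\<in>?O. ind (B f \<and> f h = i)) + real (card {f \<in> ?O. t < \<bar>Nh E h j f - muj\<bar>})
         + real (card {f \<in> ?O. t < \<bar>Nh E h i f - mui\<bar>})"
      using fin by (simp add: sum.distrib card_as_sum)
    finally have "(\<Sum>f\<in>?O. ind (f h = i)) \<le> (\<Sum>f\<in>?O. ind (B f \<and> f h = i)) + ?N * ?m / t^2 + ?N * ?m / t^2"
      using cheb[OF j] cheb[OF i] unfolding muj_def mui_def by linarith
    moreover have "(\<Sum>f\<in>?O. ind (f h = i)) = ?N * real (c i) / real n"
      using P1[OF comp h i] npos fin by (simp add: card_as_sum[symmetric] field_simps)
    ultimately show ?thesis by (simp add: algebra_simps)
  qed
  have rj0: "real (c j) - ?r \<ge> 0" using rj by simp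
  have "?N * (real (c i) / real n - 2 * ?m / t^2) * (real (c j) - ?r)
      \<le> (\<Sum>f\<in>?O. ind (B f \<and> f h = i)) * (real (c j) - ?r)"
    using stepE rj0 by (rule mult_right_mono)
  also have "\<dots> = (\<Sum>f\<in>?O. ind (B f \<and> f h = i) * (real (c j) - ?r))"
    by (rule sum_distrib_right)
  also have "\<dots> \<le> (\<Sum>f\<in>?O. ind (B f \<and> f h = i) * (\<Sum>w\<in>W. ind (f w = j)))"
    using stepC by (intro sum_mono mult_left_mono) auto
  also have "\<dots> = (\<Sum>w\<in>W. real (card {f \<in> ?O. (B f \<and> f h = i) \<and> f w = j}))"
    by (rule stepB[symmetric])
  also have "\<dots> \<le> (\<Sum>w\<in>W. 2 * ?D)" using stepA by (rule sum_mono)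
  also have "\<dots> = real (card W) * (2 * ?D)" by simp
  also have "\<dots> \<le> real n * (2 * ?D)"
  proof (rule mult_right_mono)
    have "card W \<le> card {..<n}" using Wsub by (intro card_mono) auto
    thus "real (card W) \<le> real n" by simp
  qed simp
  finally have fin_ineq: "?N * (real (c i) / real n - 2 * ?m / t^2) * (real (c j) - ?r) \<le> real n * (2 * ?D)" .
  show ?thesis
  proof -
    have "(real (c i) / real n - 2 * ?m / t^2) * (real (c j) - ?r) / (2 * real n)
        = (?N * (real (c i) / real n - 2 * ?m / t^2) * (real (c j) - ?r)) / (?N * (2 * real n))"
      using Npos by simp
    also have "\<dots> \<le> (real n * (2 * ?D)) / (?N * (2 * real n))"
      using fin_ineq Npos npos by (intro divide_right_mono) auto
    also have "\<dots> = ?D / ?N" using npos by simp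
    finally show ?thesis .
  qed
qed


lemma rho_lim: "rho \<longlonglongrightarrow> 0"
proof -
  have "rho = (\<lambda>n. (real n * (real n - 1)) ^ 2 / (real n * (real n - 1) * (real n - 2) * (real n - 3)) - 1)"
    by (simp add: fun_eq_iff rho_def D2_def D4_def)
  also have "\<dots> \<longlonglongrightarrow> 0" by real_asymp
  finally show ?thesis .
qed

lemma D3_lim: "(\<lambda>n. real n ^ 3 / D3 n - 1) \<longlonglongrightarrow> 0"
proof -
  have "(\<lambda>n. real n ^ 3 / D3 n - 1) = (\<lambda>n. real n ^ 3 / (real n * (real n - 1) * (real n - 2)) - 1)"
    by (simp add: fun_eq_iff D3_def)
  also have "\<dots> \<longlonglongrightarrow> 0" by real_asymp
  finally show ?thesis .
qed

lemma exp_col: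
  assumes "composition s n c"
  shows "measure_pmf.expectation (coloring_pmf s n c) X = avg (colorings s n c) X"
  unfolding coloring_pmf_def avg_def
  by (rule integral_pmf_of_set[OF colorings_nonempty[OF assms] colorings_finite])

lemma prob_col:
  assumes "composition s n c"
  shows "measure_pmf.prob (coloring_pmf s n c) {f. P f} = real (card {f \<in> colorings s n c. P f}) / real (card (colorings s n c))"
proof -
  have "measure_pmf.prob (coloring_pmf s n c) {f. P f} = real (card (colorings s n c \<inter> {f. P f})) / real (card (colorings s n c))"
    unfolding coloring_pmf_def by (rule measure_pmf_of_set[OF colorings_nonempty[OF assms] colorings_finite])
  also have "colorings s n c \<inter> {f. P f} = {f \<in> colorings s n c. P f}" by auto
  finally show ?thesis .
qed

lemma prob_bound:
  assumes comp: "composition s n c" and mu: "0 < mu" and av: "avg (colorings s n c) X = mu"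
    and var: "(\<Sum>f\<in>colorings s n c. (X f - mu)^2) \<le> real (card (colorings s n c)) * (R * mu^2)"
    and e: "e > 0"
  shows "measure_pmf.prob (coloring_pmf s n c) {f. e < \<bar>X f / measure_pmf.expectation (coloring_pmf s n c) X - 1\<bar>} \<le> R / e^2"
proof -
  let ?O = "colorings s n c"
  let ?N = "real (card ?O)"
  have N: "?N > 0" by (rule NN_pos[OF comp])
  have ex: "measure_pmf.expectation (coloring_pmf s n c) X = mu" using exp_col[OF comp] av by simp
  have set: "{f \<in> ?O. e < \<bar>X f / mu - 1\<bar>} = {f \<in> ?O. e * mu < \<bar>X f - mu\<bar>}"
  proof -
    have "\<bar>X f / mu - 1\<bar> = \<bar>X f - mu\<bar> / mu" for f
    proof -
      have "X f / mu - 1 = (X f - mu) / mu" using mu by (simp add: field_simps)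
      hence "\<bar>X f / mu - 1\<bar> = \<bar>X f - mu\<bar> / \<bar>mu\<bar>" by simp
      thus ?thesis using mu by simp
    qed
    hence "(e < \<bar>X f / mu - 1\<bar>) = (e * mu < \<bar>X f - mu\<bar>)" for f
      by (simp only: pos_less_divide_eq[OF mu])
    thus ?thesis by simp
  qed
  have "real (card {f \<in> ?O. e * mu < \<bar>X f - mu\<bar>}) * (e * mu)^2 \<le> (\<Sum>f\<in>?O. (X f - mu)^2)"
    by (rule chebyshev_count[OF colorings_finite]) (use e mu in simp)
  also have "\<dots> \<le> ?N * (R * mu^2)" by (rule var)
  finally have A: "real (card {f \<in> ?O. e * mu < \<bar>X f - mu\<bar>}) * (e * mu)^2 \<le> ?N * (R * mu^2)" .
  have "(real (card {f \<in> ?O. e * mu < \<bar>X f - mu\<bar>}) * e^2) * mu^2 \<le> (?N * R) * mu^2"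
    using A by (simp only: power_mult_distrib mult.assoc)
  hence B: "real (card {f \<in> ?O. e * mu < \<bar>X f - mu\<bar>}) * e^2 \<le> ?N * R"
    by (rule mult_right_le_imp_le) (use mu in simp)
  have "real (card {f \<in> ?O. e * mu < \<bar>X f - mu\<bar>}) / ?N \<le> R / e^2"
  proof -
    have "e^2 > 0" using e by simp
    thus ?thesis using B N by (simp add: divide_le_eq le_divide_eq mult.commute mult.left_commute)
  qed
  thus ?thesis unfolding ex prob_col[OF comp] set .
qed

lemma conc_scaled:
  fixes X :: "nat \<Rightarrow> (nat \<Rightarrow> nat) \<Rightarrow> real"
  assumes ev: "\<forall>\<^sub>F n in sequentially. composition s n (c n) \<and> 0 < m n \<and> alpha * m n \<le> mu n
      \<and> avg (colorings s n (c n)) (X n) = mu n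
      \<and> (\<Sum>f\<in>colorings s n (c n). (X n f - mu n)^2) \<le> real (card (colorings s n (c n))) * (m n ^ 2 * T n)
      \<and> 0 \<le> T n"
    and al: "alpha > 0" and T: "T \<longlonglongrightarrow> 0"
  shows "concentrates (\<lambda>n. coloring_pmf s n (c n)) X"
  unfolding concentrates_def
proof (intro allI impI)
  fix e :: real assume e: "e > 0"
  let ?R = "\<lambda>n. T n / alpha^2"
  show "(\<lambda>n. measure_pmf.prob (coloring_pmf s n (c n))
          {f. e < \<bar>X n f / measure_pmf.expectation (coloring_pmf s n (c n)) (X n) - 1\<bar>}) \<longlonglongrightarrow> 0"
  proof (rule tendsto_sandwich[where f="\<lambda>_. 0" and h="\<lambda>n. ?R n / e^2"])
    show "\<forall>\<^sub>F n in sequentially. 0 \<le> measure_pmf.prob (coloring_pmf s n (c n))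
          {f. e < \<bar>X n f / measure_pmf.expectation (coloring_pmf s n (c n)) (X n) - 1\<bar>}"
      by (simp add: measure_nonneg)
    show "\<forall>\<^sub>F n in sequentially. measure_pmf.prob (coloring_pmf s n (c n))
          {f. e < \<bar>X n f / measure_pmf.expectation (coloring_pmf s n (c n)) (X n) - 1\<bar>} \<le> ?R n / e^2"
      using ev
    proof (rule eventually_mono)
      fix n assume H: "composition s n (c n) \<and> 0 < m n \<and> alpha * m n \<le> mu n
        \<and> avg (colorings s n (c n)) (X n) = mu n
        \<and> (\<Sum>f\<in>colorings s n (c n). (X n f - mu n)^2) \<le> real (card (colorings s n (c n))) * (m n ^ 2 * T n)
        \<and> 0 \<le> T n"
      have "0 < alpha * m n" using al H by simp
      hence mupos: "0 < mu n" using H by linarith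
      have "m n ^ 2 * T n \<le> ?R n * mu n ^ 2"
      proof -
        have "(alpha * m n)^2 \<le> mu n ^ 2" using H al by (intro power_mono) auto
        hence "m n ^ 2 * alpha^2 \<le> mu n ^ 2" by (simp add: power_mult_distrib mult.commute)
        hence "m n ^ 2 * alpha^2 * T n \<le> mu n ^ 2 * T n" using H by (intro mult_right_mono) auto
        thus ?thesis using al by (simp add: field_simps)
      qed
      hence var: "(\<Sum>f\<in>colorings s n (c n). (X n f - mu n)^2) \<le> real (card (colorings s n (c n))) * (?R n * mu n ^ 2)"
      proof -
        have "real (card (colorings s n (c n))) * (m n ^ 2 * T n) \<le> real (card (colorings s n (c n))) * (?R n * mu n ^ 2)"
          using \<open>m n ^ 2 * T n \<le> ?R n * mu n ^ 2\<close> by (rule mult_left_mono) simp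
        thus ?thesis using H by linarith
      qed
      show "measure_pmf.prob (coloring_pmf s n (c n))
          {f. e < \<bar>X n f / measure_pmf.expectation (coloring_pmf s n (c n)) (X n) - 1\<bar>} \<le> ?R n / e^2"
        by (rule prob_bound[OF _ mupos _ var e]) (use H in auto)
    qed
    show "(\<lambda>_. 0::real) \<longlonglongrightarrow> 0" by simp
    show "(\<lambda>n. ?R n / e^2) \<longlonglongrightarrow> 0"
      using tendsto_divide[OF tendsto_divide[OF T tendsto_const[of "alpha^2"]] tendsto_const[of "e^2"]] al e
      by simp
  qed
qed



lemma avg_Mi:
  assumes comp: "composition s n c" and sg: "simple_graph n E" and i: "i < s"
  shows "avg (colorings s n c) (Mi E i) = real (card E) * qq n c i"
proof -
  have "avg (colorings s n c) (Mi E i) = avg (colorings s n c) (\<lambda>f. \<Sum>e\<in>E. Yi i e f)"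
  proof -
    have "Mi E i = (\<lambda>f. \<Sum>e\<in>E. Yi i e f)" by (rule ext) (rule Mi_sum[OF sg])
    thus ?thesis by simp
  qed
  also have "\<dots> = (\<Sum>e\<in>E. avg (colorings s n c) (Yi i e))" by (rule avg_sum[OF sg_finite[OF sg]])
  also have "\<dots> = (\<Sum>e\<in>E. qq n c i)"
  proof (intro sum.cong refl)
    fix e assume "e \<in> E"
    then obtain a b where "e = {a,b}" "a < n" "b < n" "a \<noteq> b" using sg_edge[OF sg] by blast
    thus "avg (colorings s n c) (Yi i e) = qq n c i" using avg_Yi_edge[OF comp] i by simp
  qed
  finally show ?thesis by simp
qed

lemma avg_Mt:
  assumes comp: "composition s n c" and sg: "simple_graph n E"
  shows "avg (colorings s n c) (Mtot s E) = real (card E) * QQ s n c"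
proof -
  have "avg (colorings s n c) (Mtot s E) = avg (colorings s n c) (\<lambda>f. \<Sum>e\<in>E. Yt s e f)"
  proof -
    have "Mtot s E = (\<lambda>f. \<Sum>e\<in>E. Yt s e f)" by (rule ext) (rule Mtot_sum[OF sg])
    thus ?thesis by simp
  qed
  also have "\<dots> = (\<Sum>e\<in>E. avg (colorings s n c) (Yt s e))" by (rule avg_sum[OF sg_finite[OF sg]])
  also have "\<dots> = (\<Sum>e\<in>E. QQ s n c)"
  proof (intro sum.cong refl)
    fix e assume "e \<in> E"
    then obtain a b where "e = {a,b}" "a < n" "b < n" "a \<noteq> b" using sg_edge[OF sg] by blast
    thus "avg (colorings s n c) (Yt s e) = QQ s n c" using avg_Yt_edge[OF comp] by simp
  qed
  finally show ?thesis by simp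
qed

lemma avg_Lt:
  assumes comp: "composition s n c" and sg: "simple_graph n E"
  shows "avg (colorings s n c) (Ltot s E) = real (card E) - real (card E) * QQ s n c"
proof -
  let ?O = "colorings s n c"
  have N: "real (card ?O) > 0" by (rule NN_pos[OF comp])
  have "avg ?O (Ltot s E) = (\<Sum>f\<in>?O. real (card E) - Mtot s E f) / real (card ?O)"
    unfolding avg_def Ltot_def by simp
  also have "\<dots> = (real (card ?O) * real (card E) - (\<Sum>f\<in>?O. Mtot s E f)) / real (card ?O)"
    by (simp add: sum_subtractf)
  also have "\<dots> = real (card E) - avg ?O (Mtot s E)"
    using N unfolding avg_def by (simp add: diff_divide_distrib)
  finally show ?thesis using avg_Mt[OF comp sg] by simp
qed

lemma qq_le_QQ:
  assumes "composition s n c" "i < s"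
  shows "qq n c i \<le> QQ s n c"
  unfolding QQ_def using assms by (intro member_le_sum qq_nonneg) auto

lemma c_upper:
  assumes comp: "composition s n c" and s2: "2 \<le> s" and i: "i < s"
    and b: "\<forall>k<s. beta * real n \<le> real (c k)"
  shows "real (c i) \<le> real n - beta * real n"
proof -
  define k where "k = (if i = 0 then 1 else 0::nat)"
  have k: "k < s" "k \<noteq> i" using s2 by (auto simp: k_def)
  have "real (c i) + real (c k) = (\<Sum>j\<in>{i,k}. real (c j))" using k by simp
  also have "\<dots> \<le> (\<Sum>j<s. real (c j))" using i k by (intro sum_mono2) auto
  also have "\<dots> = real n" by (rule sum_c[OF comp])
  finally show ?thesis using b k by force
qed

lemma QQ_upper:
  assumes comp: "composition s n c" and s2: "2 \<le> s" and n2: "n \<ge> 2" and beta: "beta > 0"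
    and b: "\<forall>k<s. beta * real n \<le> real (c k)"
  shows "QQ s n c \<le> 1 - beta"
proof -
  have "(\<Sum>i<s. real (c i) ^ 2 - real (c i)) \<le> (\<Sum>i<s. real (c i) * (real n - beta * real n - 1))"
  proof (intro sum_mono)
    fix i assume "i \<in> {..<s}"
    hence "real (c i) - 1 \<le> real n - beta * real n - 1" using c_upper[OF comp s2 _ b] by simp
    hence "real (c i) * (real (c i) - 1) \<le> real (c i) * (real n - beta * real n - 1)"
      by (intro mult_left_mono) auto
    thus "real (c i) ^ 2 - real (c i) \<le> real (c i) * (real n - beta * real n - 1)"
      by (simp add: power2_eq_square algebra_simps)
  qed
  also have "\<dots> = real n * (real n - beta * real n - 1)"
    using sum_c[OF comp] by (simp add: sum_distrib_right[symmetric])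
  finally have A: "(\<Sum>i<s. real (c i) ^ 2 - real (c i)) \<le> real n * (real n - beta * real n - 1)" .
  have D: "D2 n > 0" by (rule D2_pos[OF n2])
  have "QQ s n c = (\<Sum>i<s. real (c i) ^ 2 - real (c i)) / D2 n"
    unfolding QQ_def qq_def by (simp add: sum_divide_distrib)
  also have "\<dots> \<le> real n * (real n - beta * real n - 1) / D2 n"
    using A D by (intro divide_right_mono) auto
  also have "\<dots> = 1 - beta * real n / (real n - 1)"
    using n2 unfolding D2_def by (simp add: field_simps)
  also have "\<dots> \<le> 1 - beta"
  proof -
    have "beta * (real n - 1) \<le> beta * real n" using beta by simp
    hence "beta \<le> beta * real n / (real n - 1)" using n2 by (simp add: field_simps)
    thus ?thesis by simp
  qed
  finally show ?thesis .
qed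

lemma qq_lower:
  assumes n2: "n \<ge> 2" and beta: "beta > 0" and ci: "beta * real n \<le> real (c i)"
    and nb: "2 / beta \<le> real n - 1"
  shows "beta^2 / 2 \<le> qq n c i"
proof -
  have n1: "real n - 1 > 0" using n2 by simp
  have a: "beta \<le> real (c i) / real n" using ci n2 by (simp add: field_simps)
  have "1 \<le> beta * (real n - 1) / 2" using nb beta by (simp add: field_simps)
  moreover have "beta * (real n - 1) = beta * real n - beta" by (simp add: algebra_simps)
  ultimately have "beta * (real n - 1) / 2 \<le> real (c i) - 1" using ci beta by linarith
  hence b: "beta / 2 \<le> (real (c i) - 1) / (real n - 1)" using n1 by (simp add: field_simps)
  have "beta * (beta / 2) \<le> (real (c i) / real n) * ((real (c i) - 1) / (real n - 1))"
    using a b beta by (intro mult_mono) auto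
  also have "\<dots> = qq n c i" unfolding qq_def D2_def by (simp add: power2_eq_square field_simps)
  finally show ?thesis by (simp add: power2_eq_square)
qed


lemma gam_upper:
  assumes comp: "composition s n c" and n3: "n \<ge> 3" and s0: "s > 0"
  shows "gam s n c \<le> (\<Sum>i<s. (real (c i) / real n - 1 / real s)^2) + (real n ^ 3 / D3 n - 1) + 2 / real n"
proof -
  define p where "p i = real (c i) / real n" for i
  define S2 where "S2 = (\<Sum>i<s. p i ^ 2)"
  define S3 where "S3 = (\<Sum>i<s. p i ^ 3)"
  define a where "a = 1 / real s"
  have npos: "real n > 0" using n3 by simp
  have sp: "(\<Sum>i<s. p i) = 1"
    unfolding p_def using sum_c[OF comp] npos by (simp add: sum_divide_distrib[symmetric])
  have p01: "0 \<le> p i \<and> p i \<le> 1" if "i < s" for i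
    using c_le_n[OF comp that] npos unfolding p_def by (simp add: field_simps)
  have S2le: "S2 \<le> 1"
  proof -
    have "S2 \<le> (\<Sum>i<s. p i)" unfolding S2_def
      using p01 by (intro sum_mono) (simp add: power2_eq_square mult_left_le_one_le)
    thus ?thesis using sp by simp
  qed
  have S2ge: "S2 \<ge> 0" unfolding S2_def by (intro sum_nonneg) simp
  have S3le: "S3 \<le> 1"
  proof -
    have "S3 \<le> (\<Sum>i<s. p i)" unfolding S3_def
    proof (intro sum_mono)
      fix i assume "i \<in> {..<s}"
      hence "0 \<le> p i" "p i \<le> 1" using p01 by auto
      hence "p i * p i \<le> 1" by (simp add: mult_le_one)
      hence "p i * (p i * p i) \<le> p i * 1" using \<open>0 \<le> p i\<close> by (intro mult_left_mono) auto
      thus "p i ^ 3 \<le> p i" by (simp add: power3_eq_cube)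
    qed
    thus ?thesis using sp by simp
  qed
  have S3ge: "S3 \<ge> 0" unfolding S3_def using p01 by (intro sum_nonneg) simp
  have D3: "D3 n > 0" by (rule D3_pos[OF n3])
  have D3le: "D3 n \<le> real n ^ 3"
  proof -
    have "(real n - 1) * (real n - 2) \<le> real n * real n" using n3 by (intro mult_mono) auto
    hence "real n * ((real n - 1) * (real n - 2)) \<le> real n * (real n * real n)"
      by (intro mult_left_mono) auto
    thus ?thesis unfolding D3_def by (simp add: power3_eq_cube mult.assoc)
  qed
  define x where "x = real n ^ 3 / D3 n"
  have x1: "x \<ge> 1" unfolding x_def using D3 D3le by simp
  have cube: "(\<Sum>i<s. real (c i) ^ 3) / D3 n = S3 * x"
  proof -
    have "(\<Sum>i<s. real (c i) ^ 3) = (\<Sum>i<s. p i ^ 3) * real n ^ 3"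
      unfolding p_def using npos by (simp add: sum_distrib_right power_divide)
    thus ?thesis unfolding S3_def x_def by simp
  qed
  have A: "(\<Sum>i<s. real (c i) ^ 3) / D3 n \<le> S3 + (x - 1)"
  proof -
    have "S3 * (x - 1) \<le> 1 * (x - 1)" using S3le x1 by (intro mult_right_mono) auto
    thus ?thesis unfolding cube by (simp add: algebra_simps)
  qed
  have QQeq: "QQ s n c = (real n ^ 2 * S2 - real n) / D2 n"
  proof -
    have "QQ s n c = (\<Sum>i<s. real (c i) ^ 2 - real (c i)) / D2 n"
      unfolding QQ_def qq_def by (simp add: sum_divide_distrib)
    also have "(\<Sum>i<s. real (c i) ^ 2 - real (c i)) = (\<Sum>i<s. real (c i) ^ 2) - real n"
      using sum_c[OF comp] by (simp add: sum_subtractf)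
    also have "(\<Sum>i<s. real (c i) ^ 2) = real n ^ 2 * S2"
      unfolding S2_def p_def using npos by (simp add: sum_distrib_left power_divide)
    finally show ?thesis .
  qed
  have nS2: "real n * S2 \<ge> 1"
  proof -
    have "(\<Sum>i<s. real (c i)) \<le> (\<Sum>i<s. real (c i) ^ 2)"
    proof (intro sum_mono)
      fix i show "real (c i) \<le> real (c i) ^ 2" by (cases "c i") (simp_all add: power2_eq_square)
    qed
    hence "real n \<le> real n ^ 2 * S2"
      using sum_c[OF comp] unfolding S2_def p_def using npos by (simp add: sum_distrib_left power_divide)
    hence "real n * 1 \<le> real n * (real n * S2)" by (simp add: power2_eq_square mult.assoc)
    thus ?thesis using npos by (simp only: mult_le_cancel_left_pos)
  qed
  have QQge: "QQ s n c \<ge> S2 - 1 / real n"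
  proof -
    have n1: "real n - 1 > 0" using n3 by simp
    have "QQ s n c = (real n * S2 - 1) / (real n - 1)"
      unfolding QQeq D2_def using npos n1 by (simp add: field_simps power2_eq_square)
    also have "\<dots> \<ge> (real n * S2 - 1) / real n"
      using nS2 n1 by (intro divide_left_mono) auto
    finally show ?thesis using npos by (simp add: diff_divide_distrib)
  qed
  have QQ2: "QQ s n c ^ 2 \<ge> S2 ^ 2 - 2 / real n"
  proof (cases "S2 - 1 / real n \<ge> 0")
    case True
    have "(S2 - 1 / real n)^2 \<le> QQ s n c ^ 2" using True QQge by (intro power_mono) auto
    moreover have "(S2 - 1 / real n)^2 \<ge> S2 ^ 2 - 2 / real n"
    proof -
      have "(S2 - 1 / real n)^2 = S2^2 - 2 * S2 / real n + (1 / real n)^2"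
        by (simp add: power2_eq_square algebra_simps)
      moreover have "2 * S2 / real n \<le> 2 / real n" using S2le npos by (simp add: divide_right_mono)
      moreover have "(1 / real n)^2 \<ge> 0" by simp
      ultimately show ?thesis by linarith
    qed
    ultimately show ?thesis by linarith
  next
    case False
    hence "S2 < 1 / real n" by simp
    moreover have "S2 ^ 2 \<le> S2" using S2le S2ge by (simp add: power2_eq_square mult_left_le_one_le)
    moreover have "1 / real n \<le> 2 / real n" using npos by (simp add: divide_right_mono)
    moreover have "QQ s n c ^ 2 \<ge> 0" by simp
    ultimately show ?thesis by linarith
  qed
  have C: "S3 - S2 ^ 2 \<le> (\<Sum>i<s. (p i - a)^2)"
  proof -
    have e1: "(\<Sum>i<s. p i * (p i - a)^2) = S3 - 2 * a * S2 + a^2"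
    proof -
      have "(\<Sum>i<s. p i * (p i - a)^2) = (\<Sum>i<s. p i ^ 3 - 2 * a * p i ^ 2 + a^2 * p i)"
        by (intro sum.cong refl) (simp add: algebra_simps power2_eq_square power3_eq_cube)
      also have "\<dots> = S3 - 2 * a * S2 + a^2 * (\<Sum>i<s. p i)"
        unfolding S3_def S2_def by (simp add: sum.distrib sum_subtractf sum_distrib_left)
      finally show ?thesis using sp by simp
    qed
    have e2: "(\<Sum>i<s. p i * (p i - a)^2) \<le> (\<Sum>i<s. (p i - a)^2)"
      using p01 by (intro sum_mono) (simp add: mult_left_le_one_le)
    have "S3 - S2 ^ 2 = (S3 - 2 * a * S2 + a^2) - (S2 - a)^2"
      by (simp add: power2_eq_square algebra_simps)
    also have "\<dots> \<le> S3 - 2 * a * S2 + a^2" by simp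
    finally show ?thesis using e1 e2 by simp
  qed
  have "gam s n c = (\<Sum>i<s. real (c i) ^ 3) / D3 n - QQ s n c ^ 2" unfolding gam_def by simp
  also have "\<dots> \<le> S3 + (x - 1) - (S2 ^ 2 - 2 / real n)" using A QQ2 by linarith
  also have "\<dots> \<le> (\<Sum>i<s. (p i - a)^2) + (x - 1) + 2 / real n" using C by linarith
  finally show ?thesis unfolding p_def a_def x_def .
qed


lemma ev_real_ge: "\<forall>\<^sub>F n in sequentially. X \<le> real n"
  using filterlim_real_sequentially unfolding filterlim_at_top by blast

lemma Sigma2_nonneg: "Sigma2 n E \<ge> 0"
  unfolding Sigma2_def by (intro sum_nonneg) simp

lemma conc_LM:
  fixes E :: "nat \<Rightarrow> nat set set" and c :: "nat \<Rightarrow> nat \<Rightarrow> nat" and g :: "nat \<Rightarrow> real"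
  assumes s2: "s \<ge> 2" and graph: "\<forall>n. simple_graph n (E n)"
    and comp: "\<forall>\<^sub>F n in sequentially. composition s n (c n)"
    and beta: "beta > 0" and evb: "\<forall>\<^sub>F n in sequentially. \<forall>i<s. beta * real n \<le> real (c n i)"
    and evm: "\<forall>\<^sub>F n in sequentially. 1 \<le> real (card (E n))"
    and gc: "\<forall>\<^sub>F n in sequentially. 0 \<le> g n \<and> (1 \<le> g n \<or> gam s n (c n) \<le> g n)"
    and T: "(\<lambda>n. 1 / real (card (E n)) + g n * Sigma2 n (E n) / real (card (E n))^2 + rho n) \<longlonglongrightarrow> 0"
  shows "concentrates (\<lambda>n. coloring_pmf s n (c n)) (\<lambda>n. Ltot s (E n))
       \<and> concentrates (\<lambda>n. coloring_pmf s n (c n)) (\<lambda>n. Mtot s (E n))"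
proof -
  define m where "m n = real (card (E n))" for n
  define TT where "TT n = 1 / m n + g n * Sigma2 n (E n) / m n ^ 2 + rho n" for n
  have TT: "TT \<longlonglongrightarrow> 0" using T unfolding TT_def m_def .
  have evn: "\<forall>\<^sub>F n in sequentially. 4 \<le> n \<and> 2 / beta \<le> real n - 1"
    using eventually_ge_at_top[of 4] ev_real_ge[of "2 / beta + 1"] by eventually_elim auto
  have key: "\<forall>\<^sub>F n in sequentially. composition s n (c n) \<and> 0 < m n \<and> 4 \<le> n \<and> 2 / beta \<le> real n - 1
      \<and> (\<forall>i<s. beta * real n \<le> real (c n i))
      \<and> (\<Sum>f\<in>colorings s n (c n). (Mtot s (E n) f - m n * QQ s n (c n))^2)
            \<le> real (card (colorings s n (c n))) * (m n ^ 2 * TT n)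
      \<and> 0 \<le> TT n"
    using comp evb evm gc evn
  proof eventually_elim
    case (elim n)
    have cn: "composition s n (c n)" and n4: "4 \<le> n" and m1: "1 \<le> m n"
      using elim unfolding m_def by auto
    have sg: "simple_graph n (E n)" using graph by simp
    have rho0: "0 \<le> rho n" by (rule rho_nonneg[OF n4])
    have g0: "0 \<le> g n" using elim by simp
    have "(\<Sum>f\<in>colorings s n (c n). (Mtot s (E n) f - m n * QQ s n (c n))^2)
        \<le> real (card (colorings s n (c n))) * (m n + g n * Sigma2 n (E n) + rho n * m n ^ 2)"
      using var_Mt[OF cn sg n4, of "g n"] elim unfolding m_def by auto
    also have "m n + g n * Sigma2 n (E n) + rho n * m n ^ 2 = m n ^ 2 * TT n"
      unfolding TT_def using m1 by (simp add: field_simps power2_eq_square)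
    finally have V: "(\<Sum>f\<in>colorings s n (c n). (Mtot s (E n) f - m n * QQ s n (c n))^2)
        \<le> real (card (colorings s n (c n))) * (m n ^ 2 * TT n)" .
    have "0 \<le> g n * Sigma2 n (E n) / m n ^ 2" using g0 Sigma2_nonneg by simp
    hence "0 \<le> TT n" unfolding TT_def using m1 rho0 by simp
    thus ?case using V elim m1 by simp
  qed
  have L: "concentrates (\<lambda>n. coloring_pmf s n (c n)) (\<lambda>n. Ltot s (E n))"
  proof (rule conc_scaled[where m=m and alpha=beta and mu="\<lambda>n. m n - m n * QQ s n (c n)" and T=TT])
    show "\<forall>\<^sub>F n in sequentially. composition s n (c n) \<and> 0 < m n \<and> beta * m n \<le> m n - m n * QQ s n (c n)
      \<and> avg (colorings s n (c n)) (Ltot s (E n)) = m n - m n * QQ s n (c n)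
      \<and> (\<Sum>f\<in>colorings s n (c n). (Ltot s (E n) f - (m n - m n * QQ s n (c n)))^2)
           \<le> real (card (colorings s n (c n))) * (m n ^ 2 * TT n)
      \<and> 0 \<le> TT n"
      using key
    proof eventually_elim
      case (elim n)
      have cn: "composition s n (c n)" using elim by simp
      have sg: "simple_graph n (E n)" using graph by simp
      have "QQ s n (c n) \<le> 1 - beta" by (rule QQ_upper[OF cn s2]) (use elim beta in auto)
      hence "m n * QQ s n (c n) \<le> m n * (1 - beta)" using elim by (intro mult_left_mono) auto
      hence b: "beta * m n \<le> m n - m n * QQ s n (c n)" by (simp add: algebra_simps)
      have "(\<Sum>f\<in>colorings s n (c n). (Ltot s (E n) f - (m n - m n * QQ s n (c n)))^2)
          = (\<Sum>f\<in>colorings s n (c n). (Mtot s (E n) f - m n * QQ s n (c n))^2)"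
        by (intro sum.cong refl) (simp add: Ltot_def m_def power2_eq_square algebra_simps)
      thus ?case using elim b avg_Lt[OF cn sg] unfolding m_def by simp
    qed
  qed (use beta TT in auto)
  have M: "concentrates (\<lambda>n. coloring_pmf s n (c n)) (\<lambda>n. Mtot s (E n))"
  proof (rule conc_scaled[where m=m and alpha="beta^2/2" and mu="\<lambda>n. m n * QQ s n (c n)" and T=TT])
    show "\<forall>\<^sub>F n in sequentially. composition s n (c n) \<and> 0 < m n \<and> beta^2/2 * m n \<le> m n * QQ s n (c n)
      \<and> avg (colorings s n (c n)) (Mtot s (E n)) = m n * QQ s n (c n)
      \<and> (\<Sum>f\<in>colorings s n (c n). (Mtot s (E n) f - m n * QQ s n (c n))^2)
           \<le> real (card (colorings s n (c n))) * (m n ^ 2 * TT n)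
      \<and> 0 \<le> TT n"
      using key
    proof eventually_elim
      case (elim n)
      have cn: "composition s n (c n)" using elim by simp
      have sg: "simple_graph n (E n)" using graph by simp
      have s0: "0 < s" using s2 by simp
      have "beta^2/2 \<le> qq n (c n) 0" by (rule qq_lower) (use elim beta s0 in auto)
      also have "\<dots> \<le> QQ s n (c n)" by (rule qq_le_QQ[OF cn s0])
      finally have "m n * (beta^2/2) \<le> m n * QQ s n (c n)" using elim by (intro mult_left_mono) auto
      hence b: "beta^2/2 * m n \<le> m n * QQ s n (c n)" by (simp add: algebra_simps)
      thus ?case using elim avg_Mt[OF cn sg] unfolding m_def by simp
    qed
  qed (use beta TT in auto)
  show ?thesis using L M by simp
qed

lemma conc_Mi:
  fixes E :: "nat \<Rightarrow> nat set set" and c :: "nat \<Rightarrow> nat \<Rightarrow> nat"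
  assumes graph: "\<forall>n. simple_graph n (E n)" and i: "i < s"
    and comp: "\<forall>\<^sub>F n in sequentially. composition s n (c n)"
    and beta: "beta > 0" and evb: "\<forall>\<^sub>F n in sequentially. \<forall>i<s. beta * real n \<le> real (c n i)"
    and evm: "\<forall>\<^sub>F n in sequentially. 1 \<le> real (card (E n))"
    and T: "(\<lambda>n. 1 / real (card (E n)) + Sigma2 n (E n) / real (card (E n))^2 + rho n) \<longlonglongrightarrow> 0"
  shows "concentrates (\<lambda>n. coloring_pmf s n (c n)) (\<lambda>n. Mi (E n) i)"
proof -
  define m where "m n = real (card (E n))" for n
  define TT where "TT n = 1 / m n + Sigma2 n (E n) / m n ^ 2 + rho n" for n
  have TT: "TT \<longlonglongrightarrow> 0" using T unfolding TT_def m_def .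
  have evn: "\<forall>\<^sub>F n in sequentially. 4 \<le> n \<and> 2 / beta \<le> real n - 1"
    using eventually_ge_at_top[of 4] ev_real_ge[of "2 / beta + 1"] by eventually_elim auto
  show ?thesis
  proof (rule conc_scaled[where m=m and alpha="beta^2/2" and mu="\<lambda>n. m n * qq n (c n) i" and T=TT])
    show "\<forall>\<^sub>F n in sequentially. composition s n (c n) \<and> 0 < m n \<and> beta^2/2 * m n \<le> m n * qq n (c n) i
      \<and> avg (colorings s n (c n)) (Mi (E n) i) = m n * qq n (c n) i
      \<and> (\<Sum>f\<in>colorings s n (c n). (Mi (E n) i f - m n * qq n (c n) i)^2)
           \<le> real (card (colorings s n (c n))) * (m n ^ 2 * TT n)
      \<and> 0 \<le> TT n"
      using comp evb evm evn
    proof eventually_elim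
      case (elim n)
      have cn: "composition s n (c n)" and n4: "4 \<le> n" and m1: "1 \<le> m n"
        using elim unfolding m_def by auto
      have sg: "simple_graph n (E n)" using graph by simp
      have rho0: "0 \<le> rho n" by (rule rho_nonneg[OF n4])
      have "(\<Sum>f\<in>colorings s n (c n). (Mi (E n) i f - m n * qq n (c n) i)^2)
          \<le> real (card (colorings s n (c n))) * (m n + Sigma2 n (E n) + rho n * m n ^ 2)"
        using var_Mi[OF cn sg i n4] unfolding m_def by simp
      also have "m n + Sigma2 n (E n) + rho n * m n ^ 2 = m n ^ 2 * TT n"
        unfolding TT_def using m1 by (simp add: field_simps power2_eq_square)
      finally have V: "(\<Sum>f\<in>colorings s n (c n). (Mi (E n) i f - m n * qq n (c n) i)^2)
          \<le> real (card (colorings s n (c n))) * (m n ^ 2 * TT n)" .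
      have "0 \<le> Sigma2 n (E n) / m n ^ 2" using Sigma2_nonneg by simp
      hence T0: "0 \<le> TT n" unfolding TT_def using m1 rho0 by simp
      have "beta^2/2 \<le> qq n (c n) i" by (rule qq_lower) (use elim beta i in auto)
      hence "m n * (beta^2/2) \<le> m n * qq n (c n) i" using m1 by (intro mult_left_mono) auto
      hence b: "beta^2/2 * m n \<le> m n * qq n (c n) i" by (simp add: algebra_simps)
      show ?case using elim b V T0 avg_Mi[OF cn sg i] m1 unfolding m_def by simp
    qed
  qed (use beta TT in auto)
qed


lemma spread:
  assumes comp: "composition s n c" and s0: "s > 0" and n0: "n > 0" and eta: "eta > 0"
    and big: "eta^2 < (\<Sum>k<s. (real (c k) / real n - 1 / real s)^2)"
  shows "\<exists>i<s. \<exists>j<s. eta / sqrt (real s) \<le> (real (c j) - real (c i)) / real n"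
proof -
  define p where "p k = real (c k) / real n" for k
  have fin: "finite (c ` {..<s})" "c ` {..<s} \<noteq> {}" using s0 by auto
  obtain i where i: "i < s" "c i = Min (c ` {..<s})" using Min_in[OF fin] by auto
  obtain j where j: "j < s" "c j = Max (c ` {..<s})" using Max_in[OF fin] by auto
  have pij: "p i \<le> p k \<and> p k \<le> p j" if "k < s" for k
  proof -
    have "c i \<le> c k" "c k \<le> c j" using i j that fin by auto
    thus ?thesis unfolding p_def using n0 by (simp add: divide_right_mono)
  qed
  have npos: "real n > 0" using n0 by simp
  have sp: "(\<Sum>k<s. p k) = 1"
    unfolding p_def using sum_c[OF comp] npos by (simp add: sum_divide_distrib[symmetric])
  have lo: "real s * p i \<le> 1"
  proof -
    have "(\<Sum>k<s. p i) \<le> (\<Sum>k<s. p k)" using pij by (intro sum_mono) auto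
    thus ?thesis using sp by simp
  qed
  have hi: "1 \<le> real s * p j"
  proof -
    have "(\<Sum>k<s. p k) \<le> (\<Sum>k<s. p j)" using pij by (intro sum_mono) auto
    thus ?thesis using sp by simp
  qed
  have spos: "real s > 0" using s0 by simp
  have a1: "p i \<le> 1 / real s" "1 / real s \<le> p j" using lo hi spos by (simp_all add: field_simps)
  define d where "d = p j - p i"
  have d0: "d \<ge> 0" unfolding d_def using a1 by simp
  have "(\<Sum>k<s. (real (c k) / real n - 1 / real s)^2) \<le> (\<Sum>k<s. d^2)"
  proof (intro sum_mono)
    fix k assume "k \<in> {..<s}"
    hence "p i \<le> p k" "p k \<le> p j" using pij by auto
    hence "\<bar>p k - 1 / real s\<bar> \<le> d" unfolding d_def using a1 by auto
    hence "\<bar>p k - 1 / real s\<bar>^2 \<le> d^2" by (intro power_mono) auto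
    thus "(real (c k) / real n - 1 / real s)^2 \<le> d^2" unfolding p_def by simp
  qed
  hence "eta^2 < real s * d^2" using big by simp
  hence "(eta / sqrt (real s))^2 < d^2" using spos by (simp add: power_divide field_simps)
  hence "eta / sqrt (real s) < d" using d0 by (rule power_less_imp_less_base)
  hence "eta / sqrt (real s) \<le> (real (c j) - real (c i)) / real n"
    unfolding d_def p_def by (simp add: diff_divide_distrib)
  thus ?thesis using i j by blast
qed

lemma part2_asym:
  fixes E :: "nat \<Rightarrow> nat set set" and c :: "nat \<Rightarrow> nat \<Rightarrow> nat" and mu :: "nat \<Rightarrow> real"
  assumes s2: "s \<ge> 2" and graph: "\<forall>n. simple_graph n (E n)"
    and comp: "\<forall>\<^sub>F n in sequentially. composition s n (c n)"
    and beta: "beta > 0" and evb: "\<forall>\<^sub>F n in sequentially. \<forall>i<s. beta * real n \<le> real (c n i)"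
    and medges: "filterlim (\<lambda>n. real (card (E n))) at_top sequentially"
    and a: "a > 0" and eva: "\<forall>\<^sub>F n in sequentially. a \<le> zeta n (E n)"
    and eta: "eta > 0" and eve: "\<forall>\<^sub>F n in sequentially. eta < sqrt (\<Sum>i<s. (real (c n i) / real n - 1 / real s)^2)"
  shows "\<forall>\<^sub>F n in sequentially. beta^2 / 8 \<le> measure_pmf.prob (coloring_pmf s n (c n)) {f. \<bar>Mtot s (E n) f - mu n\<bar> > 0}"
proof -
  define dl where "dl = eta / sqrt (real s)"
  have s0: "s > 0" using s2 by simp
  have dl: "dl > 0" unfolding dl_def using eta s0 by simp
  define th where "th = a^2 * dl / 16"
  have th: "th > 0" unfolding th_def using a dl by simp
  have evm: "\<forall>\<^sub>F n in sequentially. max 1 (4 / (th^2 * beta)) \<le> real (card (E n))"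
    using medges unfolding filterlim_at_top by blast
  have evn: "\<forall>\<^sub>F n in sequentially. 2 * (1 + 2 / th) / beta \<le> real n \<and> 1 \<le> n"
    using ev_real_ge[of "2 * (1 + 2 / th) / beta"] eventually_ge_at_top[of 1] by eventually_elim auto
  show ?thesis
    using comp evb evm evn eva eve
  proof eventually_elim
    case (elim n)
    let ?m = "real (card (E n))"
    have cn: "composition s n (c n)" and cb: "\<forall>i<s. beta * real n \<le> real (c n i)"
      and m1: "1 \<le> ?m" and m2: "4 / (th^2 * beta) \<le> ?m" and nb: "2 * (1 + 2 / th) / beta \<le> real n"
      and n1: "1 \<le> n" and az: "a \<le> zeta n (E n)"
      and es: "eta < sqrt (\<Sum>i<s. (real (c n i) / real n - 1 / real s)^2)"
      using elim by auto
    have sg: "simple_graph n (E n)" using graph by simp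
    have mpos: "?m > 0" using m1 by simp
    have npos: "real n > 0" using n1 by simp
    have "eta^2 < (\<Sum>i<s. (real (c n i) / real n - 1 / real s)^2)"
    proof -
      have "eta^2 < (sqrt (\<Sum>i<s. (real (c n i) / real n - 1 / real s)^2))^2"
        using es eta by (intro power_strict_mono) auto
      thus ?thesis by (simp add: sum_nonneg)
    qed
    then obtain i j where ij: "i < s" "j < s" "dl \<le> (real (c n j) - real (c n i)) / real n"
      using spread[OF cn s0 _ eta] n1 unfolding dl_def by auto
    have ineq: "i \<noteq> j" using ij dl by auto
    obtain h where h: "h < n" "Sigma2 n (E n) \<le> 2 * ?m * real (degree (E n) h)"
      using maxdeg[OF sg] n1 by auto
    have "a * ?m \<le> sqrt (Sigma2 n (E n))" using az mpos unfolding zeta_def by (simp add: field_simps)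
    hence "(a * ?m)^2 \<le> (sqrt (Sigma2 n (E n)))^2" using a mpos by (intro power_mono) auto
    hence S2: "a^2 * ?m^2 \<le> Sigma2 n (E n)" using Sigma2_nonneg by (simp add: power_mult_distrib)
    have dh: "a^2 * ?m / 2 \<le> real (degree (E n) h)"
    proof -
      have "a^2 * ?m * ?m \<le> 2 * ?m * real (degree (E n) h)" using S2 h by (simp add: power2_eq_square)
      hence "?m * (a^2 * ?m) \<le> ?m * (2 * real (degree (E n) h))" by (simp add: mult_ac)
      hence "a^2 * ?m \<le> 2 * real (degree (E n) h)" using mpos by (simp only: mult_le_cancel_left_pos)
      thus ?thesis by simp
    qed
    define K where "K = th * ?m"
    have K: "K > 0" unfolding K_def using th mpos by simp
    have gap: "real (degree (E n) h) * (real (c n j) - real (c n i)) / real n > 2 * K + 2 * K"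
    proof -
      have "(a^2 * ?m / 2) * dl \<le> real (degree (E n) h) * ((real (c n j) - real (c n i)) / real n)"
        using dh ij(3) a dl mpos by (intro mult_mono) auto
      moreover have "(a^2 * ?m / 2) * dl = 8 * K" unfolding K_def th_def by (simp add: field_simps)
      moreover have "2 * K + 2 * K < 8 * K" using K by simp
      moreover have "real (degree (E n) h) * (real (c n j) - real (c n i)) / real n
          = real (degree (E n) h) * ((real (c n j) - real (c n i)) / real n)" by simp
      ultimately show ?thesis by linarith
    qed
    have rK: "1 + 2 * ?m / K = 1 + 2 / th" unfolding K_def using mpos th by (simp add: field_simps)
    have cj: "real (c n j) \<ge> beta * real n" using cb ij by simp
    have bn: "beta * real n \<ge> 2 * (1 + 2 / th)" using nb beta by (simp add: field_simps)
    have th2: "1 + 2 / th \<ge> 0" using th by simp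
    have rj: "real (c n j) \<ge> 1 + 2 * ?m / K"
    proof -
      have "1 + 2 / th \<le> 2 * (1 + 2 / th)" using th2 by simp
      hence "1 + 2 / th \<le> real (c n j)" using cj bn by linarith
      thus ?thesis using rK by simp
    qed
    have P: "real (card {f \<in> colorings s n (c n). Mtot s (E n) f \<noteq> mu n}) / real (card (colorings s n (c n)))
      \<ge> (real (c n i) / real n - 2 * ?m / K^2) * (real (c n j) - (1 + 2 * ?m / K)) / (2 * real n)"
      by (rule part2_n[OF cn sg h(1) ij(1) ij(2) ineq K K gap rj])
    have F1: "real (c n i) / real n - 2 * ?m / K^2 \<ge> beta / 2"
    proof -
      have "real (c n i) / real n \<ge> beta" using cb ij npos by (simp add: field_simps)
      moreover have "2 * ?m / K^2 \<le> beta / 2"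
      proof -
        have "2 * ?m / K^2 = 2 / (th^2 * ?m)" unfolding K_def using mpos by (simp add: field_simps power2_eq_square)
        also have "\<dots> \<le> beta / 2"
        proof -
          have "4 \<le> th^2 * beta * ?m" using m2 th beta by (simp add: field_simps)
          thus ?thesis using th beta mpos by (simp add: field_simps)
        qed
        finally show ?thesis .
      qed
      ultimately show ?thesis by linarith
    qed
    have F2: "(real (c n j) - (1 + 2 * ?m / K)) / (2 * real n) \<ge> beta / 4"
    proof -
      have "1 + 2 / th \<le> beta * real n / 2" using bn by simp
      hence "real (c n j) - (1 + 2 / th) \<ge> beta * real n / 2" using cj by linarith
      hence "real (c n j) - (1 + 2 * ?m / K) \<ge> beta * real n / 2" using rK by simp
      hence "(beta * real n / 2) / (2 * real n) \<le> (real (c n j) - (1 + 2 * ?m / K)) / (2 * real n)"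
        using npos by (intro divide_right_mono) auto
      moreover have "(beta * real n / 2) / (2 * real n) = beta / 4" using npos by simp
      ultimately show ?thesis by linarith
    qed
    have "beta^2 / 8 = (beta / 2) * (beta / 4)" by (simp add: power2_eq_square)
    also have "\<dots> \<le> (real (c n i) / real n - 2 * ?m / K^2) * ((real (c n j) - (1 + 2 * ?m / K)) / (2 * real n))"
    proof (rule mult_mono[OF F1 F2])
      show "0 \<le> real (c n i) / real n - 2 * ?m / K^2" using F1 beta by linarith
      show "0 \<le> beta / 4" using beta by simp
    qed
    also have "\<dots> = (real (c n i) / real n - 2 * ?m / K^2) * (real (c n j) - (1 + 2 * ?m / K)) / (2 * real n)"
      by simp
    also have "\<dots> \<le> real (card {f \<in> colorings s n (c n). Mtot s (E n) f \<noteq> mu n}) / real (card (colorings s n (c n)))"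
      by (rule P)
    also have "\<dots> = measure_pmf.prob (coloring_pmf s n (c n)) {f. \<bar>Mtot s (E n) f - mu n\<bar> > 0}"
      using prob_col[OF cn, of "\<lambda>f. \<bar>Mtot s (E n) f - mu n\<bar> > 0"] by simp
    finally show ?case .
  qed
qed


theorem theorem1p1:
  fixes s :: nat and E :: "nat \<Rightarrow> nat set set" and c :: "nat \<Rightarrow> nat \<Rightarrow> nat"
  assumes s2: "s \<ge> 2"
    and graph: "\<forall>n. simple_graph n (E n)"
    and comp: "\<forall>\<^sub>F n in sequentially. composition s n (c n)"
    and cmin: "liminf (\<lambda>n. ereal (real (Min (c n ` {..<s})) / real n)) > 0"
    and medges: "filterlim (\<lambda>n. real (card (E n))) at_top sequentially"
  defines "P \<equiv> (\<lambda>n. coloring_pmf s n (c n))"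
  shows
    "((\<lambda>n. zeta n (E n)) \<longlonglongrightarrow> 0 \<longrightarrow>
        (\<forall>i<s. concentrates P (\<lambda>n. Mi (E n) i))
        \<and> concentrates P (\<lambda>n. Ltot s (E n)) \<and> concentrates P (\<lambda>n. Mtot s (E n)))
     \<and> ((\<exists>a b. 0 < a \<and> 0 < b \<and> (\<forall>\<^sub>F n in sequentially. a \<le> zeta n (E n) \<and> zeta n (E n) \<le> b))
         \<and> liminf (\<lambda>n. ereal (sqrt (\<Sum>i<s. (real (c n i) / real n - 1 / real s) ^ 2))) > 0
        \<longrightarrow> liminf (\<lambda>n. ereal (measure_pmf.prob (P n)
                {f. \<bar>Mtot s (E n) f - measure_pmf.expectation (P n) (Mtot s (E n))\<bar> > 0})) > 0
          \<and> liminf (\<lambda>n. ereal (measure_pmf.prob (P n)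
                {f. \<bar>Ltot s (E n) f - measure_pmf.expectation (P n) (Ltot s (E n))\<bar> > 0})) > 0)
     \<and> ((\<lambda>n. sqrt (\<Sum>i<s. (real (c n i) / real n - 1 / real s) ^ 2)) \<longlonglongrightarrow> 0 \<longrightarrow>
        concentrates P (\<lambda>n. Ltot s (E n)) \<and> concentrates P (\<lambda>n. Mtot s (E n)))"
proof -
  have Pdef: "P = (\<lambda>n. coloring_pmf s n (c n))" using P_def by simp
  have s0: "s > 0" using s2 by simp
  obtain beta where beta: "beta > 0" and evb: "\<forall>\<^sub>F n in sequentially. \<forall>i<s. beta * real n \<le> real (c n i)"
  proof -
    obtain z where z: "0 < ereal z" "ereal z < liminf (\<lambda>n. ereal (real (Min (c n ` {..<s})) / real n))"
      using ereal_dense2[OF cmin] by blast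
    have zpos: "z > 0" using z(1) by simp
    have "\<forall>\<^sub>F n in sequentially. ereal z < ereal (real (Min (c n ` {..<s})) / real n)"
      by (rule less_LiminfD[OF z(2)])
    hence "\<forall>\<^sub>F n in sequentially. \<forall>i<s. z * real n \<le> real (c n i)"
    proof (rule eventually_mono)
      fix n assume "ereal z < ereal (real (Min (c n ` {..<s})) / real n)"
      hence zl: "z < real (Min (c n ` {..<s})) / real n" by simp
      have npos: "real n > 0"
      proof (rule ccontr)
        assume "\<not> real n > 0"
        hence "real n = 0" by simp
        thus False using zl zpos by simp
      qed
      hence zm: "z * real n < real (Min (c n ` {..<s}))" using zl by (simp add: field_simps)
      show "\<forall>i<s. z * real n \<le> real (c n i)"
      proof (intro allI impI)
        fix i assume "i < s"
        hence "Min (c n ` {..<s}) \<le> c n i" by (intro Min_le) auto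
        thus "z * real n \<le> real (c n i)" using zm by linarith
      qed
    qed
    thus ?thesis using that zpos by blast
  qed
  have evm: "\<forall>\<^sub>F n in sequentially. 1 \<le> real (card (E n))"
    using medges unfolding filterlim_at_top by blast
  have minv: "(\<lambda>n. 1 / real (card (E n))) \<longlonglongrightarrow> 0"
    using tendsto_inverse_0_at_top[OF medges] by (simp add: inverse_eq_divide)
  have part1: "(\<forall>i<s. concentrates P (\<lambda>n. Mi (E n) i))
        \<and> concentrates P (\<lambda>n. Ltot s (E n)) \<and> concentrates P (\<lambda>n. Mtot s (E n))"
    if z0: "(\<lambda>n. zeta n (E n)) \<longlonglongrightarrow> 0"
  proof -
    have z2: "(\<lambda>n. 1 / real (card (E n)) + zeta n (E n) ^ 2 + rho n) \<longlonglongrightarrow> 0 + 0 ^ 2 + 0"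
      by (intro tendsto_add minv tendsto_power z0 rho_lim)
    have eq: "\<forall>\<^sub>F n in sequentially. 1 / real (card (E n)) + zeta n (E n) ^ 2 + rho n
        = 1 / real (card (E n)) + Sigma2 n (E n) / real (card (E n))^2 + rho n"
      using evm
    proof (rule eventually_mono)
      fix n assume "1 \<le> real (card (E n))"
      have "zeta n (E n) ^ 2 = Sigma2 n (E n) / real (card (E n))^2"
        unfolding zeta_def using Sigma2_nonneg by (simp add: power_divide)
      thus "1 / real (card (E n)) + zeta n (E n) ^ 2 + rho n
        = 1 / real (card (E n)) + Sigma2 n (E n) / real (card (E n))^2 + rho n" by simp
    qed
    have T: "(\<lambda>n. 1 / real (card (E n)) + Sigma2 n (E n) / real (card (E n))^2 + rho n) \<longlonglongrightarrow> 0"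
      using Lim_transform_eventually[OF z2 eq] by simp
    have T1: "(\<lambda>n. 1 / real (card (E n)) + (\<lambda>_. 1::real) n * Sigma2 n (E n) / real (card (E n))^2 + rho n) \<longlonglongrightarrow> 0"
      using T by simp
    have Mi: "\<forall>i<s. concentrates P (\<lambda>n. Mi (E n) i)"
      unfolding Pdef using conc_Mi[OF graph _ comp beta evb evm T] by blast
    have LM: "concentrates P (\<lambda>n. Ltot s (E n)) \<and> concentrates P (\<lambda>n. Mtot s (E n))"
      unfolding Pdef by (rule conc_LM[OF s2 graph comp beta evb evm _ T1]) simp
    show ?thesis using Mi LM by blast
  qed
  have part2: "liminf (\<lambda>n. ereal (measure_pmf.prob (P n)
                {f. \<bar>Mtot s (E n) f - measure_pmf.expectation (P n) (Mtot s (E n))\<bar> > 0})) > 0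
          \<and> liminf (\<lambda>n. ereal (measure_pmf.prob (P n)
                {f. \<bar>Ltot s (E n) f - measure_pmf.expectation (P n) (Ltot s (E n))\<bar> > 0})) > 0"
    if H: "(\<exists>a b. 0 < a \<and> 0 < b \<and> (\<forall>\<^sub>F n in sequentially. a \<le> zeta n (E n) \<and> zeta n (E n) \<le> b))
         \<and> liminf (\<lambda>n. ereal (sqrt (\<Sum>i<s. (real (c n i) / real n - 1 / real s) ^ 2))) > 0"
  proof -
    obtain a b where a: "0 < a" and evab: "\<forall>\<^sub>F n in sequentially. a \<le> zeta n (E n) \<and> zeta n (E n) \<le> b"
      using H by blast
    have eva: "\<forall>\<^sub>F n in sequentially. a \<le> zeta n (E n)" using evab by (rule eventually_mono) simp
    obtain eta where z: "0 < ereal eta" "ereal eta < liminf (\<lambda>n. ereal (sqrt (\<Sum>i<s. (real (c n i) / real n - 1 / real s) ^ 2)))"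
      using ereal_dense2 H by blast
    have eta: "eta > 0" using z(1) by simp
    have eve: "\<forall>\<^sub>F n in sequentially. eta < sqrt (\<Sum>i<s. (real (c n i) / real n - 1 / real s) ^ 2)"
      using less_LiminfD[OF z(2)] by simp
    have b8: "0 < ereal (beta^2 / 8)" using beta by simp
    have M: "liminf (\<lambda>n. ereal (measure_pmf.prob (P n)
                {f. \<bar>Mtot s (E n) f - measure_pmf.expectation (P n) (Mtot s (E n))\<bar> > 0})) > 0"
    proof -
      have "\<forall>\<^sub>F n in sequentially. beta^2 / 8 \<le> measure_pmf.prob (coloring_pmf s n (c n))
          {f. \<bar>Mtot s (E n) f - measure_pmf.expectation (P n) (Mtot s (E n))\<bar> > 0}"
        by (rule part2_asym[OF s2 graph comp beta evb medges a eva eta eve])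
      hence "\<forall>\<^sub>F n in sequentially. ereal (beta^2 / 8) \<le> ereal (measure_pmf.prob (P n)
          {f. \<bar>Mtot s (E n) f - measure_pmf.expectation (P n) (Mtot s (E n))\<bar> > 0})"
        unfolding Pdef by simp
      hence "ereal (beta^2 / 8) \<le> liminf (\<lambda>n. ereal (measure_pmf.prob (P n)
          {f. \<bar>Mtot s (E n) f - measure_pmf.expectation (P n) (Mtot s (E n))\<bar> > 0}))"
        by (rule Liminf_bounded)
      thus ?thesis by (rule order.strict_trans2[OF b8])
    qed
    have L: "liminf (\<lambda>n. ereal (measure_pmf.prob (P n)
                {f. \<bar>Ltot s (E n) f - measure_pmf.expectation (P n) (Ltot s (E n))\<bar> > 0})) > 0"
    proof -
      let ?mu = "\<lambda>n. real (card (E n)) - measure_pmf.expectation (P n) (Ltot s (E n))"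
      have seq: "{f. \<bar>Ltot s (E n) f - measure_pmf.expectation (P n) (Ltot s (E n))\<bar> > 0}
          = {f. \<bar>Mtot s (E n) f - ?mu n\<bar> > 0}" for n
      proof -
        have "\<bar>Ltot s (E n) f - measure_pmf.expectation (P n) (Ltot s (E n))\<bar> = \<bar>Mtot s (E n) f - ?mu n\<bar>" for f
          unfolding Ltot_def by (simp add: abs_minus_commute)
        thus ?thesis by simp
      qed
      have "\<forall>\<^sub>F n in sequentially. beta^2 / 8 \<le> measure_pmf.prob (coloring_pmf s n (c n))
          {f. \<bar>Mtot s (E n) f - ?mu n\<bar> > 0}"
        by (rule part2_asym[OF s2 graph comp beta evb medges a eva eta eve])
      hence "\<forall>\<^sub>F n in sequentially. ereal (beta^2 / 8) \<le> ereal (measure_pmf.prob (P n)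
          {f. \<bar>Ltot s (E n) f - measure_pmf.expectation (P n) (Ltot s (E n))\<bar> > 0})"
        unfolding seq by (simp add: Pdef)
      hence "ereal (beta^2 / 8) \<le> liminf (\<lambda>n. ereal (measure_pmf.prob (P n)
          {f. \<bar>Ltot s (E n) f - measure_pmf.expectation (P n) (Ltot s (E n))\<bar> > 0}))"
        by (rule Liminf_bounded)
      thus ?thesis by (rule order.strict_trans2[OF b8])
    qed
    show ?thesis using M L by blast
  qed
  have part3: "concentrates P (\<lambda>n. Ltot s (E n)) \<and> concentrates P (\<lambda>n. Mtot s (E n))"
    if H: "(\<lambda>n. sqrt (\<Sum>i<s. (real (c n i) / real n - 1 / real s) ^ 2)) \<longlonglongrightarrow> 0"
  proof -
    define dd where "dd n = (\<Sum>i<s. (real (c n i) / real n - 1 / real s) ^ 2)" for n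
    have dd0: "dd n \<ge> 0" for n unfolding dd_def by (intro sum_nonneg) simp
    have "(\<lambda>n. (sqrt (dd n))^2) \<longlonglongrightarrow> 0 ^ 2"
      using H unfolding dd_def by (intro tendsto_power)
    hence dd: "dd \<longlonglongrightarrow> 0" using dd0 by simp
    define g where "g n = dd n + \<bar>real n ^ 3 / D3 n - 1\<bar> + 2 / real n" for n
    have g: "g \<longlonglongrightarrow> 0"
    proof -
      have "(\<lambda>n. dd n + \<bar>real n ^ 3 / D3 n - 1\<bar> + 2 / real n) \<longlonglongrightarrow> 0 + 0 + 0"
        by (intro tendsto_add dd tendsto_rabs_zero D3_lim lim_const_over_n)
      thus ?thesis unfolding g_def by simp
    qed
    have g0: "g n \<ge> 0" for n unfolding g_def using dd0 by simp
    have gc: "\<forall>\<^sub>F n in sequentially. 0 \<le> g n \<and> (1 \<le> g n \<or> gam s n (c n) \<le> g n)"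
      using comp eventually_ge_at_top[of 3]
    proof eventually_elim
      case (elim n)
      have "gam s n (c n) \<le> dd n + (real n ^ 3 / D3 n - 1) + 2 / real n"
        unfolding dd_def by (rule gam_upper) (use elim s0 in auto)
      also have "\<dots> \<le> g n" unfolding g_def by simp
      finally show ?case using g0 by simp
    qed
    have mid: "(\<lambda>n. g n * Sigma2 n (E n) / real (card (E n))^2) \<longlonglongrightarrow> 0"
    proof (rule tendsto_sandwich[where f="\<lambda>_. 0" and h="\<lambda>n. 2 * g n"])
      show "\<forall>\<^sub>F n in sequentially. 0 \<le> g n * Sigma2 n (E n) / real (card (E n))^2"
        using g0 Sigma2_nonneg by simp
      show "\<forall>\<^sub>F n in sequentially. g n * Sigma2 n (E n) / real (card (E n))^2 \<le> 2 * g n"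
        using evm
      proof (rule eventually_mono)
        fix n assume m1: "1 \<le> real (card (E n))"
        have "g n * Sigma2 n (E n) \<le> g n * (2 * real (card (E n))^2)"
          using sigma2_le[OF graph[rule_format]] g0 by (intro mult_left_mono) auto
        thus "g n * Sigma2 n (E n) / real (card (E n))^2 \<le> 2 * g n"
          using m1 by (simp add: field_simps)
      qed
      show "(\<lambda>_. 0::real) \<longlonglongrightarrow> 0" by simp
      show "(\<lambda>n. 2 * g n) \<longlonglongrightarrow> 0" using tendsto_mult[OF tendsto_const[of 2] g] by simp
    qed
    have T: "(\<lambda>n. 1 / real (card (E n)) + g n * Sigma2 n (E n) / real (card (E n))^2 + rho n) \<longlonglongrightarrow> 0"
      using tendsto_add[OF tendsto_add[OF minv mid] rho_lim] by simp
    show ?thesis unfolding Pdef by (rule conc_LM[OF s2 graph comp beta evb evm gc T])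
  qed
  show ?thesis using part1 part2 part3 by blast
qed


end
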